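(* Let $R$ be a nonzero commutative ring which is not a field, let $n\ge2$, and let $K$ be a field. Then $\mathrm{St}^K_n(R)$ is not irreducible as a $\mathrm{GL}_n(R)$-representation.
   Context: A flag in $R^n$ is a chain $0\subsetneq V_1\subsetneq\cdots\subsetneq V_k\subsetneq R^n$ of free direct summands; complete if $k=n-1$, good if a subflag of a complete flag. The Tits complex $\mathcal{T}_n(R)$ has vertices the direct summands $V$ of $R^n$, $0\ne V\ne R^n$, with $V$ and $R^n/V$ free, and a $k$-simplex for every good flag with $k+1$ terms; $\mathrm{GL}_n(R)$ acts on it simplicially. $\mathrm{St}^K_n(R)=\tilde H_{n-2}(\mathcal{T}_n(R);K)$ with the induced $\mathrm{GL}_n(R)$-action. *)

theory Defs
  imports Main
begin

definition Rn :: "nat \<Rightarrow> (nat \<Rightarrow> 'r::comm_ring_1) set" where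
  "Rn n = {v. \<forall>i\<ge>n. v i = 0}"

definition zvec :: "nat \<Rightarrow> 'r::comm_ring_1" where
  "zvec = (\<lambda>i. 0)"

definition lincomb :: "'r::comm_ring_1 list \<Rightarrow> (nat \<Rightarrow> 'r) list \<Rightarrow> (nat \<Rightarrow> 'r)" where
  "lincomb cs vs = (\<lambda>i. \<Sum>j<length vs. cs ! j * (vs ! j) i)"

definition span_R :: "(nat \<Rightarrow> 'r::comm_ring_1) list \<Rightarrow> (nat \<Rightarrow> 'r) set" where
  "span_R vs = {lincomb cs vs | cs. length cs = length vs}"

definition lin_indep :: "(nat \<Rightarrow> 'r::comm_ring_1) list \<Rightarrow> bool" where
  "lin_indep vs \<longleftrightarrow>
     (\<forall>cs. length cs = length vs \<and> lincomb cs vs = zvec \<longrightarrow> (\<forall>c\<in>set cs. c = 0))"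

definition submod :: "nat \<Rightarrow> (nat \<Rightarrow> 'r::comm_ring_1) set \<Rightarrow> bool" where
  "submod n V \<longleftrightarrow> V \<subseteq> Rn n \<and> zvec \<in> V \<and>
     (\<forall>x\<in>V. \<forall>y\<in>V. (\<lambda>i. x i + y i) \<in> V) \<and> (\<forall>c. \<forall>x\<in>V. (\<lambda>i. c * x i) \<in> V)"

text \<open>Free module (with a basis; free direct summands of R^n are finitely generated,
  so the basis is finite).\<close>
definition free_mod :: "(nat \<Rightarrow> 'r::comm_ring_1) set \<Rightarrow> bool" where
  "free_mod V \<longleftrightarrow> (\<exists>vs. set vs \<subseteq> V \<and> span_R vs = V \<and> lin_indep vs)"

text \<open>R^n / V is free: there are vectors whose images in R^n/V form a basis.\<close>
definition quot_free :: "nat \<Rightarrow> (nat \<Rightarrow> 'r::comm_ring_1) set \<Rightarrow> bool" where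
  "quot_free n V \<longleftrightarrow> (\<exists>ws. set ws \<subseteq> Rn n \<and>
     (\<forall>v\<in>Rn n. \<exists>cs. length cs = length ws \<and> (\<lambda>i. v i - lincomb cs ws i) \<in> V) \<and>
     (\<forall>cs. length cs = length ws \<and> lincomb cs ws \<in> V \<longrightarrow> (\<forall>c\<in>set cs. c = 0)))"

definition direct_summand :: "nat \<Rightarrow> (nat \<Rightarrow> 'r::comm_ring_1) set \<Rightarrow> bool" where
  "direct_summand n V \<longleftrightarrow> submod n V \<and>
     (\<exists>W. submod n W \<and> V \<inter> W = {zvec} \<and>
        (\<forall>x\<in>Rn n. \<exists>v\<in>V. \<exists>w\<in>W. x = (\<lambda>i. v i + w i)))"

definition tits_vertex :: "nat \<Rightarrow> (nat \<Rightarrow> 'r::comm_ring_1) set \<Rightarrow> bool" where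
  "tits_vertex n V \<longleftrightarrow> direct_summand n V \<and> V \<noteq> {zvec} \<and> V \<noteq> Rn n \<and>
     free_mod V \<and> quot_free n V"

definition is_flag :: "nat \<Rightarrow> (nat \<Rightarrow> 'r::comm_ring_1) set list \<Rightarrow> bool" where
  "is_flag n F \<longleftrightarrow> sorted_wrt (\<subset>) F \<and>
     (\<forall>V\<in>set F. direct_summand n V \<and> free_mod V \<and> V \<noteq> {zvec} \<and> V \<noteq> Rn n)"

definition complete_flag :: "nat \<Rightarrow> (nat \<Rightarrow> 'r::comm_ring_1) set list \<Rightarrow> bool" where
  "complete_flag n F \<longleftrightarrow> is_flag n F \<and> length F = n - 1"

definition good_flag :: "nat \<Rightarrow> (nat \<Rightarrow> 'r::comm_ring_1) set list \<Rightarrow> bool" where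
  "good_flag n F \<longleftrightarrow> is_flag n F \<and> (\<exists>G. complete_flag n G \<and> set F \<subseteq> set G)"

text \<open>Simplices of the augmented (ordered) Tits complex: a k-simplex is a good flag with
  k+1 terms (all vertices), written in increasing order; the empty list is the (-1)-simplex
  used for reduced homology.\<close>
definition tits_simplex :: "nat \<Rightarrow> (nat \<Rightarrow> 'r::comm_ring_1) set list \<Rightarrow> bool" where
  "tits_simplex n \<sigma> \<longleftrightarrow> \<sigma> = [] \<or> (good_flag n \<sigma> \<and> (\<forall>V\<in>set \<sigma>. tits_vertex n V))"

text \<open>Simplicial chains with coefficients in K supported on simplices with m vertices
  (i.e. of dimension m-1).\<close>
definition chains :: "nat \<Rightarrow> nat \<Rightarrow> ((nat \<Rightarrow> 'r::comm_ring_1) set list \<Rightarrow> 'k::field) set" where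
  "chains n m = {c. finite {\<sigma>. c \<sigma> \<noteq> 0} \<and>
      (\<forall>\<sigma>. c \<sigma> \<noteq> 0 \<longrightarrow> tits_simplex n \<sigma> \<and> length \<sigma> = m)}"

definition del_nth :: "nat \<Rightarrow> 'a list \<Rightarrow> 'a list" where
  "del_nth i xs = take i xs @ drop (Suc i) xs"

text \<open>Simplicial boundary (on 0-chains it is the augmentation onto the (-1)-simplex []).\<close>
definition bdry :: "((nat \<Rightarrow> 'r::comm_ring_1) set list \<Rightarrow> 'k::field) \<Rightarrow> ((nat \<Rightarrow> 'r) set list \<Rightarrow> 'k)" where
  "bdry c = (\<lambda>\<tau>. \<Sum>\<sigma>\<in>{\<sigma>. c \<sigma> \<noteq> 0}.
       \<Sum>i\<in>{i. i < length \<sigma> \<and> del_nth i \<sigma> = \<tau>}. (- 1) ^ i * c \<sigma>)"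

definition cycles :: "nat \<Rightarrow> nat \<Rightarrow> ((nat \<Rightarrow> 'r::comm_ring_1) set list \<Rightarrow> 'k::field) set" where
  "cycles n m = {c \<in> chains n m. bdry c = (\<lambda>\<tau>. 0)}"

definition boundaries :: "nat \<Rightarrow> nat \<Rightarrow> ((nat \<Rightarrow> 'r::comm_ring_1) set list \<Rightarrow> 'k::field) set" where
  "boundaries n m = bdry ` chains n (Suc m)"

definition in_GL :: "nat \<Rightarrow> (nat \<Rightarrow> nat \<Rightarrow> 'r::comm_ring_1) \<Rightarrow> bool" where
  "in_GL n g \<longleftrightarrow> (\<exists>h.
     (\<forall>i<n. \<forall>j<n. (\<Sum>l<n. g i l * h l j) = (if i = j then 1 else 0)) \<and>
     (\<forall>i<n. \<forall>j<n. (\<Sum>l<n. h i l * g l j) = (if i = j then 1 else 0)))"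

definition mat_act :: "nat \<Rightarrow> (nat \<Rightarrow> nat \<Rightarrow> 'r::comm_ring_1) \<Rightarrow> (nat \<Rightarrow> 'r) \<Rightarrow> (nat \<Rightarrow> 'r)" where
  "mat_act n g v = (\<lambda>i. if i < n then (\<Sum>j<n. g i j * v j) else 0)"

definition chain_act :: "nat \<Rightarrow> (nat \<Rightarrow> nat \<Rightarrow> 'r::comm_ring_1)
    \<Rightarrow> ((nat \<Rightarrow> 'r) set list \<Rightarrow> 'k::field) \<Rightarrow> ((nat \<Rightarrow> 'r) set list \<Rightarrow> 'k)" where
  "chain_act n g c = (\<lambda>\<tau>. \<Sum>\<sigma>\<in>{\<sigma>. c \<sigma> \<noteq> 0 \<and> map (\<lambda>V. mat_act n g ` V) \<sigma> = \<tau>}. c \<sigma>)"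

definition GL_stable_subspace :: "nat \<Rightarrow> ((nat \<Rightarrow> 'r::comm_ring_1) set list \<Rightarrow> 'k::field) set \<Rightarrow> bool" where
  "GL_stable_subspace n W \<longleftrightarrow>
     (\<forall>x\<in>W. \<forall>y\<in>W. (\<lambda>\<sigma>. x \<sigma> + y \<sigma>) \<in> W) \<and>
     (\<forall>a. \<forall>x\<in>W. (\<lambda>\<sigma>. a * x \<sigma>) \<in> W) \<and>
     (\<forall>g. in_GL n g \<longrightarrow> (\<forall>x\<in>W. chain_act n g x \<in> W))"

text \<open>St^K_n(R) = reduced H_{n-2}(T_n(R);K) = Z/B with Z the (n-2)-cycles (chains on
  simplices with n-1 vertices) and B the boundaries. It is irreducible iff it is nonzero
  and its only GL_n(R)-subrepresentations are 0 and itself; subrepresentations of Z/B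
  correspond to GL_n(R)-stable subspaces W with B <= W <= Z.\<close>
definition St_irreducible :: "'r::comm_ring_1 itself \<Rightarrow> 'k::field itself \<Rightarrow> nat \<Rightarrow> bool" where
  "St_irreducible _ _ n \<longleftrightarrow>
     (let Z = (cycles n (n - 1) :: ((nat \<Rightarrow> 'r) set list \<Rightarrow> 'k) set);
          B = (boundaries n (n - 1) :: ((nat \<Rightarrow> 'r) set list \<Rightarrow> 'k) set)
      in B \<noteq> Z \<and>
         (\<forall>W. B \<subseteq> W \<and> W \<subseteq> Z \<and> GL_stable_subspace n W \<longrightarrow> W = B \<or> W = Z))"

end

theory Submission
  imports Defs "HOL-Library.Disjoint_Sets" "HOL-Combinatorics.Permutations"
begin

definition ev :: "nat \<Rightarrow> nat \<Rightarrow> 'r::comm_ring_1" where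
  "ev j = (\<lambda>i. if i = j then 1 else 0)"

definition SS :: "nat \<Rightarrow> nat set \<Rightarrow> (nat \<Rightarrow> 'r::comm_ring_1) set" where
  "SS n A = {v \<in> Rn n. \<forall>i. i \<notin> A \<longrightarrow> v i = 0}"

lemma lincomb_ev_nth:
  assumes "distinct l" "k < length l"
  shows "lincomb cs (map ev l) (l!k) = (cs!k :: 'r::comm_ring_1)"
proof -
  have "lincomb cs (map ev l) (l!k) = (\<Sum>j<length l. if j = k then cs!k else (0::'r))"
    unfolding lincomb_def using assms
    by (intro sum.cong) (auto simp: ev_def nth_eq_iff_index_eq)
  also have "\<dots> = cs!k" using assms by simp
  finally show ?thesis .
qed

lemma lincomb_ev_notin:
  assumes "i \<notin> set l"
  shows "lincomb cs (map ev l) i = (0 :: 'r::comm_ring_1)"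
  unfolding lincomb_def using assms
  by (intro sum.neutral) (auto simp: ev_def)

lemma lincomb_ev_map:
  assumes "distinct l"
  shows "lincomb (map v l) (map ev l) i = (if i \<in> set l then v i else (0 :: 'r::comm_ring_1))"
proof (cases "i \<in> set l")
  case True
  then obtain k where k: "k < length l" "l!k = i" by (auto simp: in_set_conv_nth)
  have "lincomb (map v l) (map ev l) (l!k) = map v l ! k"
    by (rule lincomb_ev_nth[OF assms k(1)])
  with k True show ?thesis by simp
qed (simp add: lincomb_ev_notin)

lemma ev_Rn: "j < n \<Longrightarrow> ev j \<in> Rn n"
  by (auto simp: Rn_def ev_def)

lemma lincomb_Rn:
  assumes "set vs \<subseteq> Rn n"
  shows "lincomb cs vs \<in> Rn n"
  using assms unfolding Rn_def lincomb_def
  by (auto intro!: sum.neutral simp: subset_iff) (use nth_mem in fastforce)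

lemma SS_sub: "SS n A \<subseteq> Rn n" by (auto simp: SS_def)

lemma submod_SS: "submod n (SS n A)"
  by (auto simp: submod_def SS_def Rn_def zvec_def)

lemma free_SS:
  assumes "A \<subseteq> {..<n}"
  shows "free_mod (SS n A :: (nat \<Rightarrow> 'r::comm_ring_1) set)"
proof -
  have fin: "finite A" using assms finite_subset by blast
  define l where "l = sorted_list_of_set A"
  have l: "distinct l" "set l = A" using fin by (auto simp: l_def)
  define vs :: "(nat \<Rightarrow> 'r) list" where "vs = map ev l"
  have "set vs \<subseteq> SS n A" using l assms
    by (auto simp: vs_def SS_def intro!: ev_Rn) (auto simp: ev_def)
  moreover have "span_R vs = SS n A"
  proof
    show "span_R vs \<subseteq> SS n A"
    proof
      fix u :: "nat \<Rightarrow> 'r" assume "u \<in> span_R vs"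
      then obtain cs where u: "u = lincomb cs vs" by (auto simp: span_R_def)
      have "u \<in> Rn n" unfolding u
        by (rule lincomb_Rn) (use l assms in \<open>auto simp: vs_def ev_Rn\<close>)
      moreover have "\<forall>i. i \<notin> A \<longrightarrow> u i = 0"
        using l by (auto simp: u vs_def lincomb_ev_notin)
      ultimately show "u \<in> SS n A" by (simp add: SS_def)
    qed
    show "SS n A \<subseteq> span_R vs"
    proof
      fix u :: "nat \<Rightarrow> 'r" assume u: "u \<in> SS n A"
      have "lincomb (map u l) vs = u"
        using u l by (auto simp: fun_eq_iff vs_def lincomb_ev_map SS_def)
      then show "u \<in> span_R vs" unfolding span_R_def vs_def
        by (metis (mono_tags, lifting) length_map mem_Collect_eq)
    qed
  qed
  moreover have "lin_indep vs"
    unfolding lin_indep_def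
  proof (intro allI impI ballI)
    fix cs :: "'r list" and c assume h: "length cs = length vs \<and> lincomb cs vs = zvec" "c \<in> set cs"
    then obtain k where k: "k < length cs" "cs!k = c" by (auto simp: in_set_conv_nth)
    have "lincomb cs vs (l!k) = cs!k"
      unfolding vs_def by (rule lincomb_ev_nth) (use l k h in \<open>auto simp: vs_def\<close>)
    with h k show "c = 0" by (simp add: zvec_def)
  qed
  ultimately show ?thesis unfolding free_mod_def by blast
qed

lemma quot_free_SS:
  assumes "A \<subseteq> {..<n}"
  shows "quot_free n (SS n A :: (nat \<Rightarrow> 'r::comm_ring_1) set)"
proof -
  define l where "l = sorted_list_of_set ({..<n} - A)"
  have l: "distinct l" "set l = {..<n} - A" by (auto simp: l_def)
  define ws :: "(nat \<Rightarrow> 'r) list" where "ws = map ev l"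
  have "set ws \<subseteq> Rn n"
  proof
    fix w assume "w \<in> set ws"
    then obtain j where j: "j \<in> set l" "w = ev j" unfolding ws_def by auto
    then have "j < n" using l(2) by blast
    then show "w \<in> Rn n" using j(2) ev_Rn by blast
  qed
  moreover have "\<forall>v\<in>Rn n. \<exists>cs. length cs = length ws \<and> (\<lambda>i. v i - lincomb cs ws i) \<in> SS n A"
  proof
    fix v :: "nat \<Rightarrow> 'r" assume v: "v \<in> Rn n"
    have "(\<lambda>i. v i - lincomb (map v l) ws i) \<in> SS n A"
      using v l unfolding SS_def Rn_def ws_def lincomb_ev_map[OF l(1)] by auto
    then show "\<exists>cs. length cs = length ws \<and> (\<lambda>i. v i - lincomb cs ws i) \<in> SS n A"
      by (intro exI[of _ "map v l"]) (simp add: ws_def)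
  qed
  moreover have "\<forall>cs. length cs = length ws \<and> lincomb cs ws \<in> SS n A \<longrightarrow> (\<forall>c\<in>set cs. c = 0)"
  proof (intro allI impI ballI)
    fix cs :: "'r list" and c assume h: "length cs = length ws \<and> lincomb cs ws \<in> SS n A" "c \<in> set cs"
    then obtain k where k: "k < length cs" "cs!k = c" by (auto simp: in_set_conv_nth)
    have "lincomb cs ws (l!k) = cs!k"
      unfolding ws_def by (rule lincomb_ev_nth) (use l k h in \<open>auto simp: ws_def\<close>)
    moreover have "l!k \<in> set l" using k h by (simp add: ws_def)
    then have "l!k \<notin> A" using l by blast
    ultimately show "c = 0" using h k by (auto simp: SS_def)
  qed
  ultimately show ?thesis unfolding quot_free_def by blast
qed

lemma direct_summand_SS:
  assumes "A \<subseteq> {..<n}"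
  shows "direct_summand n (SS n A :: (nat \<Rightarrow> 'r::comm_ring_1) set)"
proof -
  have i: "SS n A \<inter> SS n ({..<n} - A) = ({zvec} :: (nat \<Rightarrow> 'r) set)"
  proof (intro equalityI subsetI)
    fix u :: "nat \<Rightarrow> 'r" assume u: "u \<in> SS n A \<inter> SS n ({..<n} - A)"
    have "u i = 0" for i
      using u by (cases "i < n") (auto simp: SS_def Rn_def)
    then show "u \<in> {zvec}" by (simp add: zvec_def fun_eq_iff)
  qed (auto simp: SS_def Rn_def zvec_def)
  have d: "\<exists>v\<in>SS n A. \<exists>w\<in>SS n ({..<n} - A). x = (\<lambda>i. v i + w i)" if x: "x \<in> Rn n" for x :: "nat \<Rightarrow> 'r"
  proof -
    define v where "v = (\<lambda>i. if i \<in> A then x i else 0)"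
    define w where "w = (\<lambda>i. if i \<in> A then 0 else x i)"
    have "v \<in> SS n A" using x by (simp add: v_def SS_def Rn_def)
    moreover have "w \<in> SS n ({..<n} - A)" using x by (simp add: w_def SS_def Rn_def)
    moreover have "x = (\<lambda>i. v i + w i)" by (simp add: v_def w_def fun_eq_iff)
    ultimately show ?thesis by blast
  qed
  show ?thesis unfolding direct_summand_def
    using submod_SS i d by blast
qed


definition Fl :: "nat \<Rightarrow> (nat \<Rightarrow> nat) \<Rightarrow> (nat \<Rightarrow> 'r::comm_ring_1) set list" where
  "Fl n p = map (\<lambda>k. SS n (p ` {..k})) [0..<n - 1]"

lemma SS_mono: "A \<subseteq> B \<Longrightarrow> SS n A \<subseteq> SS n B"
  by (auto simp: SS_def)

lemma ev_SS: "j < n \<Longrightarrow> j \<in> A \<Longrightarrow> ev j \<in> SS n A"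
  by (auto simp: SS_def ev_Rn) (auto simp: ev_def)

lemma ev_notSS: "(1::'r::comm_ring_1) \<noteq> 0 \<Longrightarrow> j \<notin> A \<Longrightarrow> (ev j :: nat \<Rightarrow> 'r) \<notin> SS n A"
  by (auto simp: SS_def ev_def)

lemma SS_strict:
  assumes "(1::'r::comm_ring_1) \<noteq> 0" "A \<subset> B" "B \<subseteq> {..<n}"
  shows "(SS n A :: (nat \<Rightarrow> 'r) set) \<subset> SS n B"
proof -
  obtain j where j: "j \<in> B" "j \<notin> A" using assms by blast
  have "(ev j :: nat \<Rightarrow> 'r) \<in> SS n B" using j assms by (intro ev_SS) auto
  moreover have "(ev j :: nat \<Rightarrow> 'r) \<notin> SS n A" using j assms ev_notSS by blast
  ultimately show ?thesis using SS_mono[of A B n] assms by blast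
qed

lemma SS_nonzero:
  assumes "(1::'r::comm_ring_1) \<noteq> 0" "j \<in> A" "A \<subseteq> {..<n}"
  shows "(SS n A :: (nat \<Rightarrow> 'r) set) \<noteq> {zvec}"
proof
  assume h: "(SS n A :: (nat \<Rightarrow> 'r) set) = {zvec}"
  have "(ev j :: nat \<Rightarrow> 'r) \<in> SS n A" using assms by (intro ev_SS) auto
  then have "(ev j :: nat \<Rightarrow> 'r) j = zvec j" using h by simp
  then show False using assms by (simp add: ev_def zvec_def)
qed

lemma SS_nonfull:
  assumes "(1::'r::comm_ring_1) \<noteq> 0" "j < n" "j \<notin> A"
  shows "(SS n A :: (nat \<Rightarrow> 'r) set) \<noteq> Rn n"
  using ev_Rn[OF assms(2)] ev_notSS[OF assms(1,3)] by metis

lemma perm_img_sub: "(p :: nat \<Rightarrow> nat) permutes {..<n} \<Longrightarrow> k < n \<Longrightarrow> p ` {..k} \<subseteq> {..<n}"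
proof
  fix y assume p: "p permutes {..<n}" and k: "k < n" and "y \<in> p ` {..k}"
  then obtain x where x: "x \<le> k" "y = p x" by auto
  then have "x \<in> {..<n}" using k by simp
  then show "y \<in> {..<n}" using permutes_in_image[OF p] x by blast
qed

lemma perm_img_strict:
  fixes p :: "nat \<Rightarrow> nat"
  assumes "p permutes {..<n}" "k < l" "l < n"
  shows "p ` {..k} \<subset> p ` {..l}"
proof -
  have "p l \<notin> p ` {..k}"
  proof
    assume "p l \<in> p ` {..k}"
    then obtain m where "m \<le> k" "p m = p l" by auto
    then have "m = l" using injD[OF permutes_inj[OF assms(1)]] by blast
    with \<open>m \<le> k\<close> assms(2) show False by simp
  qed
  then show ?thesis using assms(2) by fastforce
qed

lemma perm_img_card:
  fixes p :: "nat \<Rightarrow> nat"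
  assumes "p permutes {..<n}"
  shows "card (p ` {..k}) = Suc k"
  using permutes_inj[OF assms] by (simp add: card_image inj_on_subset)

lemma tits_vertex_SS:
  assumes "(1::'r::comm_ring_1) \<noteq> 0" "A \<subseteq> {..<n}" "A \<noteq> {}" "A \<noteq> {..<n}"
  shows "tits_vertex n (SS n A :: (nat \<Rightarrow> 'r) set)"
proof -
  obtain j where j: "j \<in> A" using assms by blast
  obtain j' where j': "j' < n" "j' \<notin> A" using assms by blast
  show ?thesis unfolding tits_vertex_def
    using direct_summand_SS[OF assms(2)] free_SS[OF assms(2)] quot_free_SS[OF assms(2)]
      SS_nonzero[OF assms(1) j assms(2)] SS_nonfull[OF assms(1) j'] by blast
qed

lemma Fl_simplex:
  assumes one: "(1::'r::comm_ring_1) \<noteq> 0" and p: "p permutes {..<n}"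
  shows "tits_simplex n (Fl n p :: (nat \<Rightarrow> 'r) set list)" "length (Fl n p :: (nat \<Rightarrow> 'r) set list) = n - 1"
proof -
  have V: "tits_vertex n (SS n (p ` {..k}) :: (nat \<Rightarrow> 'r) set)" if k: "k < n - 1" for k
  proof (rule tits_vertex_SS[OF one])
    show "p ` {..k} \<subseteq> {..<n}" using perm_img_sub[OF p] k by simp
    show "p ` {..k} \<noteq> {}" by simp
    show "p ` {..k} \<noteq> {..<n}" using perm_img_card[OF p, of k] k by auto
  qed
  have sw: "sorted_wrt (\<subset>) (Fl n p :: (nat \<Rightarrow> 'r) set list)"
    unfolding sorted_wrt_iff_nth_less Fl_def
  proof (intro allI impI)
    fix i j assume ij: "i < j" "j < length (map (\<lambda>k. (SS n (p ` {..k}) :: (nat \<Rightarrow> 'r) set)) [0..<n - 1])"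
    then have "j < n - 1" by simp
    then show "map (\<lambda>k. (SS n (p ` {..k}) :: (nat \<Rightarrow> 'r) set)) [0..<n - 1] ! i
             \<subset> map (\<lambda>k. SS n (p ` {..k})) [0..<n - 1] ! j"
      using ij SS_strict[OF one perm_img_strict[OF p ij(1)] perm_img_sub[OF p]] by simp
  qed
  have fl: "is_flag n (Fl n p :: (nat \<Rightarrow> 'r) set list)"
    unfolding is_flag_def using sw V by (auto simp: Fl_def tits_vertex_def)
  show len: "length (Fl n p :: (nat \<Rightarrow> 'r) set list) = n - 1" by (simp add: Fl_def)
  have "good_flag n (Fl n p :: (nat \<Rightarrow> 'r) set list)"
    unfolding good_flag_def complete_flag_def using fl len by blast
  then show "tits_simplex n (Fl n p :: (nat \<Rightarrow> 'r) set list)"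
    unfolding tits_simplex_def using V by (auto simp: Fl_def)
qed


definition z1 :: "nat \<Rightarrow> (nat \<Rightarrow> 'r::comm_ring_1) set list \<Rightarrow> 'k::field" where
  "z1 n = (\<lambda>\<sigma>. \<Sum>p\<in>{p. p permutes {..<n} \<and> Fl n p = \<sigma>}. of_int (sign p))"

lemma bdry_sum:
  assumes "finite T" "{\<sigma>. c \<sigma> \<noteq> 0} \<subseteq> T"
  shows "bdry c \<tau> = (\<Sum>\<sigma>\<in>T. \<Sum>i\<in>{i. i < length \<sigma> \<and> del_nth i \<sigma> = \<tau>}. (- 1) ^ i * c \<sigma>)"
  unfolding bdry_def
  by (rule sum.mono_neutral_left) (use assms in auto)

lemma del_nth_cong:
  assumes "length xs = length ys" "\<And>k. k < length xs \<Longrightarrow> k \<noteq> i \<Longrightarrow> xs!k = ys!k"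
  shows "del_nth i xs = del_nth i ys"
proof -
  have "take i xs = take i ys"
    by (rule nth_equalityI) (use assms in auto)
  moreover have "drop (Suc i) xs = drop (Suc i) ys"
    by (rule nth_equalityI) (use assms in auto)
  ultimately show ?thesis by (simp add: del_nth_def)
qed

lemma transpose_img:
  assumes "k \<noteq> i"
  shows "transpose i (Suc i) ` {..k} = {..(k::nat)}"
proof (cases "k < i")
  case True
  have "transpose i (Suc i) x = x" if "x \<in> {..k}" for x
    using that True by (intro transpose_apply_other) auto
  then have "transpose i (Suc i) ` {..k} = (\<lambda>x. x) ` {..k}" by (rule image_cong[OF refl])
  then show ?thesis by simp
next
  case False
  then have "i \<in> {..k}" "Suc i \<in> {..k}" using assms by auto
  then have "transpose i (Suc i) permutes {..k}" by (rule permutes_swap_id)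
  then show ?thesis by (rule permutes_image)
qed

lemma comp_transpose_img:
  "k \<noteq> i \<Longrightarrow> (\<lambda>x. p (transpose i (Suc i) x)) ` {..k} = p ` {..(k::nat)}"
proof -
  assume k: "k \<noteq> i"
  have "(\<lambda>x. p (transpose i (Suc i) x)) ` {..k} = p ` (transpose i (Suc i) ` {..k})"
    by (rule image_image[symmetric])
  also have "\<dots> = p ` {..k}" using transpose_img[OF k] by simp
  finally show ?thesis .
qed

lemma Fl_swap:
  assumes "i < n - 1"
  shows "del_nth i (Fl n (p \<circ> transpose i (Suc i))) = del_nth i (Fl n p)"
  by (rule del_nth_cong) (auto simp: Fl_def comp_transpose_img)

lemma z1_supp: "{\<sigma>. (z1 n \<sigma> :: 'k::field) \<noteq> 0} \<subseteq> (Fl n :: _ \<Rightarrow> (nat \<Rightarrow> 'r::comm_ring_1) set list) ` {p. p permutes {..<n}}"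
proof
  fix \<sigma> :: "(nat \<Rightarrow> 'r) set list" assume "\<sigma> \<in> {\<sigma>. (z1 n \<sigma> :: 'k) \<noteq> 0}"
  then have "{p. p permutes {..<n} \<and> Fl n p = \<sigma>} \<noteq> {}"
  proof (intro notI)
    assume e: "{p. p permutes {..<n} \<and> Fl n p = \<sigma>} = {}"
    have "(z1 n \<sigma> :: 'k) = 0" unfolding z1_def e by simp
    then show False using \<open>\<sigma> \<in> {\<sigma>. (z1 n \<sigma> :: 'k) \<noteq> 0}\<close> by simp
  qed
  then show "\<sigma> \<in> Fl n ` {p. p permutes {..<n}}" by auto
qed

lemma z1_bdry:
  "bdry (z1 n :: (nat \<Rightarrow> 'r::comm_ring_1) set list \<Rightarrow> 'k::field) = (\<lambda>\<tau>. 0)"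
proof
  fix \<tau> :: "(nat \<Rightarrow> 'r) set list"
  define P where "P = {p. p permutes {..<(n::nat)}}"
  have finP: "finite P" unfolding P_def by (rule finite_permutations) simp
  define I where "I = (\<lambda>\<sigma>::(nat \<Rightarrow> 'r) set list. {i. i < length \<sigma> \<and> del_nth i \<sigma> = \<tau>})"
  have finI: "finite (I \<sigma>)" for \<sigma> unfolding I_def by auto
  define f :: "(nat \<Rightarrow> nat) \<Rightarrow> nat \<Rightarrow> 'k" where "f = (\<lambda>p i. (- 1) ^ i * (of_int (sign p) :: 'k))"
  have "bdry (z1 n :: _ \<Rightarrow> 'k) \<tau> = (\<Sum>\<sigma>\<in>Fl n ` P. \<Sum>i\<in>I \<sigma>. (- 1) ^ i * (z1 n \<sigma> :: 'k))"
    unfolding I_def P_def by (rule bdry_sum) (use finP z1_supp in \<open>auto simp: P_def\<close>)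
  also have "\<dots> = (\<Sum>\<sigma>\<in>Fl n ` P. \<Sum>p\<in>{p. p \<in> P \<and> Fl n p = \<sigma>}. \<Sum>i\<in>I \<sigma>. f p i)"
    by (intro sum.cong refl) (auto simp: z1_def P_def f_def sum_distrib_left intro: sum.swap)
  also have "\<dots> = (\<Sum>\<sigma>\<in>(Fl n :: _ \<Rightarrow> (nat \<Rightarrow> 'r) set list) ` P. \<Sum>p\<in>{p. p \<in> P \<and> Fl n p = \<sigma>}. \<Sum>i\<in>I (Fl n p). f p i)"
  proof (rule sum.cong[OF refl])
    fix \<sigma> :: "(nat \<Rightarrow> 'r) set list" assume "\<sigma> \<in> Fl n ` P"
    show "(\<Sum>p\<in>{p. p \<in> P \<and> Fl n p = \<sigma>}. \<Sum>i\<in>I \<sigma>. f p i) = (\<Sum>p\<in>{p. p \<in> P \<and> Fl n p = \<sigma>}. \<Sum>i\<in>I (Fl n p). f p i)"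
      by (rule sum.cong[OF refl]) auto
  qed
  also have "\<dots> = (\<Sum>p\<in>P. \<Sum>i\<in>I (Fl n p). f p i)"
    by (rule sum.image_gen[symmetric]) (rule finP)
  also have "\<dots> = (\<Sum>x\<in>Sigma P (\<lambda>p. I (Fl n p)). case x of (p, i) \<Rightarrow> f p i)"
    by (subst sum.Sigma) (auto simp: finP finI)
  also have "\<dots> = 0"
  proof -
    define X where "X = Sigma P (\<lambda>p. I (Fl n p))"
    define H where "H = (\<lambda>(p::nat\<Rightarrow>nat, i::nat). (p \<circ> transpose i (Suc i), i))"
    have key: "H (p, i) \<in> X \<and> H (H (p, i)) = (p, i) \<and> H (p, i) \<noteq> (p, i) \<and>
        (case H (p, i) of (p, i) \<Rightarrow> f p i) + (case (p, i) of (p, i) \<Rightarrow> f p i) = 0"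
      if x: "(p, i) \<in> X" for p i
    proof -
      have p: "p permutes {..<n}" using x by (auto simp: P_def X_def)
      have i: "i < n - 1" "del_nth i (Fl n p) = \<tau>" using x by (auto simp: I_def Fl_def X_def)
      define t where "t = transpose i (Suc i)"
      have tp: "t permutes {..<n}" unfolding t_def using i by (intro permutes_swap_id) auto
      have p': "p \<circ> t permutes {..<n}" using tp p by (rule permutes_compose)
      have d0: "del_nth i (Fl n (p \<circ> t) :: (nat \<Rightarrow> 'r) set list) = del_nth i (Fl n p)"
        unfolding t_def by (rule Fl_swap[OF i(1)])
      have d: "del_nth i (Fl n (p \<circ> t) :: (nat \<Rightarrow> 'r) set list) = \<tau>" using d0 i(2) by simp
      have l: "length (Fl n (p \<circ> t) :: (nat \<Rightarrow> 'r) set list) = n - 1" by (simp add: Fl_def)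
      have inX: "H (p, i) \<in> X" using p' d l i by (auto simp: H_def X_def P_def I_def t_def)
      have tt: "p \<circ> t \<circ> t = p" by (simp add: t_def comp_assoc)
      have ne: "p \<circ> t \<noteq> p"
      proof
        assume "p \<circ> t = p"
        then have "p (t i) = p i" by (metis comp_apply)
        then have "p (Suc i) = p i" by (simp add: t_def)
        then show False using injD[OF permutes_inj[OF p]] by fastforce
      qed
      have perm: "permutation p" using p finite_lessThan permutation_permutes by blast
      have sg: "sign (p \<circ> t) = - sign p"
        using sign_compose[OF perm permutation_swap_id, of i "Suc i"] sign_swap_id[of i "Suc i"]
        by (simp add: t_def)
      have Hp: "H (p, i) = (p \<circ> t, i)" by (simp add: H_def t_def)
      have Ht: "H (p \<circ> t, i) = (p \<circ> t \<circ> t, i)" by (simp add: H_def t_def)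
      have "f (p \<circ> t) i + f p i = 0"
        unfolding f_def sg by simp
      then have "(case H (p, i) of (p, i) \<Rightarrow> f p i) + (case (p, i) of (p, i) \<Rightarrow> f p i) = 0"
        unfolding Hp by simp
      with inX tt ne show ?thesis unfolding Hp Ht by simp
    qed
    have key': "H x \<in> X \<and> H (H x) = x \<and> H x \<noteq> x \<and>
        (case H x of (p, i) \<Rightarrow> f p i) + (case x of (p, i) \<Rightarrow> f p i) = 0" if "x \<in> X" for x
    proof -
      obtain p i where e: "x = (p, i)" by (cases x)
      show ?thesis unfolding e by (rule key[OF that[unfolded e]])
    qed
    have k1: "H x \<in> X" if "x \<in> X" for x using key'[OF that] by (rule conjunct1)
    have k2: "H (H x) = x" if "x \<in> X" for x using conjunct1[OF conjunct2[OF key'[OF that]]] .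
    have k3: "H x \<noteq> x" if "x \<in> X" for x using conjunct1[OF conjunct2[OF conjunct2[OF key'[OF that]]]] .
    have k4: "(case H x of (p, i) \<Rightarrow> f p i) + (case x of (p, i) \<Rightarrow> f p i) = 0" if "x \<in> X" for x
      using conjunct2[OF conjunct2[OF conjunct2[OF key'[OF that]]]] .
    show ?thesis unfolding X_def[symmetric]
      by (rule sum_involution_eq_0[where h = H and X = X and f = "\<lambda>x. case x of (p, i) \<Rightarrow> f p i", OF k4 k1 k2 k3])
  qed
  finally show "bdry (z1 n :: _ \<Rightarrow> 'k) \<tau> = 0" .
qed


definition liso :: "nat \<Rightarrow> ((nat \<Rightarrow> 'r::comm_ring_1) \<Rightarrow> (nat \<Rightarrow> 'r)) \<Rightarrow> ((nat \<Rightarrow> 'r) \<Rightarrow> (nat \<Rightarrow> 'r)) \<Rightarrow> bool" where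
  "liso n \<phi> \<psi> \<longleftrightarrow> (\<forall>v. \<phi> v \<in> Rn n) \<and> (\<forall>v. \<psi> v \<in> Rn n) \<and>
     (\<forall>a b. \<phi> (\<lambda>i. a i + b i) = (\<lambda>i. \<phi> a i + \<phi> b i)) \<and>
     (\<forall>a b. \<psi> (\<lambda>i. a i + b i) = (\<lambda>i. \<psi> a i + \<psi> b i)) \<and>
     (\<forall>c a. \<phi> (\<lambda>i. c * a i) = (\<lambda>i. c * \<phi> a i)) \<and>
     (\<forall>c a. \<psi> (\<lambda>i. c * a i) = (\<lambda>i. c * \<psi> a i)) \<and>
     (\<forall>cs vs. \<phi> (lincomb cs vs) = lincomb cs (map \<phi> vs)) \<and>
     (\<forall>cs vs. \<psi> (lincomb cs vs) = lincomb cs (map \<psi> vs)) \<and>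
     (\<forall>v\<in>Rn n. \<phi> (\<psi> v) = v) \<and> (\<forall>v\<in>Rn n. \<psi> (\<phi> v) = v)"

lemma liso_sym: "liso n \<phi> \<psi> \<Longrightarrow> liso n \<psi> \<phi>"
  unfolding liso_def by (elim conjE) (intro conjI; assumption)

context
  fixes n :: nat and \<phi> \<psi> :: "(nat \<Rightarrow> 'r::comm_ring_1) \<Rightarrow> (nat \<Rightarrow> 'r)"
  assumes L: "liso n \<phi> \<psi>"
begin

lemma L_Rn: "\<phi> v \<in> Rn n" using L by (simp add: liso_def)
lemma L_add: "\<phi> (\<lambda>i. a i + b i) = (\<lambda>i. \<phi> a i + \<phi> b i)" using L by (simp add: liso_def)
lemma L_smul: "\<phi> (\<lambda>i. c * a i) = (\<lambda>i. c * \<phi> a i)" using L by (simp add: liso_def)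
lemma L_lincomb: "\<phi> (lincomb cs vs) = lincomb cs (map \<phi> vs)" using L by (simp add: liso_def)
lemma L_inv1: "v \<in> Rn n \<Longrightarrow> \<phi> (\<psi> v) = v" using L by (simp add: liso_def)
lemma L_inv2: "v \<in> Rn n \<Longrightarrow> \<psi> (\<phi> v) = v" using L by (simp add: liso_def)
lemma L_psiRn: "\<psi> v \<in> Rn n" using L by (simp add: liso_def)

lemma L_zvec: "\<phi> zvec = zvec"
proof -
  have "\<phi> zvec = \<phi> (\<lambda>i. 0 * zvec i)" by (simp add: zvec_def)
  also have "\<dots> = (\<lambda>i. 0 * \<phi> zvec i)" by (rule L_smul)
  finally show ?thesis by (simp add: zvec_def)
qed

lemma L_inj: "a \<in> Rn n \<Longrightarrow> b \<in> Rn n \<Longrightarrow> \<phi> a = \<phi> b \<Longrightarrow> a = b"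
proof -
  assume a: "a \<in> Rn n" and b: "b \<in> Rn n" and e: "\<phi> a = \<phi> b"
  have "a = \<psi> (\<phi> a)" using L_inv2[OF a] by simp
  also have "\<dots> = \<psi> (\<phi> b)" using e by simp
  also have "\<dots> = b" using L_inv2[OF b] by simp
  finally show ?thesis .
qed

lemma L_img_sub: "\<phi> ` V \<subseteq> Rn n" using L_Rn by blast

lemma L_img_inv: "V \<subseteq> Rn n \<Longrightarrow> \<psi> ` (\<phi> ` V) = V"
proof -
  assume V: "V \<subseteq> Rn n"
  have "\<psi> ` (\<phi> ` V) = (\<lambda>v. \<psi> (\<phi> v)) ` V" by (rule image_image)
  also have "\<dots> = (\<lambda>v. v) ` V" by (rule image_cong[OF refl]) (use V L_inv2 in blast)
  finally show ?thesis by simp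
qed

lemma L_img_inj: "V \<subseteq> Rn n \<Longrightarrow> W \<subseteq> Rn n \<Longrightarrow> \<phi> ` V = \<phi> ` W \<Longrightarrow> V = W"
proof -
  assume V: "V \<subseteq> Rn n" and W: "W \<subseteq> Rn n" and e: "\<phi> ` V = \<phi> ` W"
  have "V = \<psi> ` (\<phi> ` V)" using L_img_inv[OF V] by simp
  also have "\<dots> = \<psi> ` (\<phi> ` W)" using e by simp
  also have "\<dots> = W" using L_img_inv[OF W] by simp
  finally show ?thesis .
qed

lemma L_img_Rn: "\<phi> ` Rn n = Rn n"
proof
  show "\<phi> ` Rn n \<subseteq> Rn n" by (rule L_img_sub)
  show "Rn n \<subseteq> \<phi> ` Rn n"
  proof
    fix v :: "nat \<Rightarrow> 'r" assume "v \<in> Rn n"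
    then have "v = \<phi> (\<psi> v)" by (simp add: L_inv1)
    then show "v \<in> \<phi> ` Rn n" using L_psiRn by blast
  qed
qed

lemma L_submod: "submod n V \<Longrightarrow> submod n (\<phi> ` V)"
  unfolding submod_def
proof (intro conjI ballI allI)
  assume S: "V \<subseteq> Rn n \<and> zvec \<in> V \<and> (\<forall>x\<in>V. \<forall>y\<in>V. (\<lambda>i. x i + y i) \<in> V) \<and> (\<forall>c. \<forall>x\<in>V. (\<lambda>i. c * x i) \<in> V)"
  show "\<phi> ` V \<subseteq> Rn n" by (rule L_img_sub)
  have "zvec \<in> V" using S by blast
  then show "zvec \<in> \<phi> ` V" by (rule rev_image_eqI) (simp add: L_zvec)
  fix x y assume "x \<in> \<phi> ` V" "y \<in> \<phi> ` V"
  then obtain a b where ab: "a \<in> V" "b \<in> V" "x = \<phi> a" "y = \<phi> b" by blast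
  have "(\<lambda>i. x i + y i) = \<phi> (\<lambda>i. a i + b i)" using ab by (simp add: L_add)
  then show "(\<lambda>i. x i + y i) \<in> \<phi> ` V" using S ab by blast
next
  fix c x
  assume S: "V \<subseteq> Rn n \<and> zvec \<in> V \<and> (\<forall>x\<in>V. \<forall>y\<in>V. (\<lambda>i. x i + y i) \<in> V) \<and> (\<forall>c. \<forall>x\<in>V. (\<lambda>i. c * x i) \<in> V)"
  assume "x \<in> \<phi> ` V"
  then obtain a where a: "a \<in> V" "x = \<phi> a" by blast
  have "(\<lambda>i. c * x i) = \<phi> (\<lambda>i. c * a i)" using a by (simp add: L_smul)
  then show "(\<lambda>i. c * x i) \<in> \<phi> ` V" using S a by blast
qed

lemma L_direct_summand: "direct_summand n V \<Longrightarrow> direct_summand n (\<phi> ` V)"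
proof -
  assume D: "direct_summand n V"
  then obtain W where W: "submod n W" "V \<inter> W = {zvec}" "\<forall>x\<in>Rn n. \<exists>v\<in>V. \<exists>w\<in>W. x = (\<lambda>i. v i + w i)"
    and SV: "submod n V" unfolding direct_summand_def by blast
  have VR: "V \<subseteq> Rn n" and WR: "W \<subseteq> Rn n" using SV W(1) by (auto simp: submod_def)
  have "\<phi> ` V \<inter> \<phi> ` W = {zvec}"
  proof
    show "\<phi> ` V \<inter> \<phi> ` W \<subseteq> {zvec}"
    proof
      fix u assume "u \<in> \<phi> ` V \<inter> \<phi> ` W"
      then obtain a b where ab: "a \<in> V" "b \<in> W" "u = \<phi> a" "u = \<phi> b" by blast
      then have "a = b" using L_inj VR WR by blast
      then have "a = zvec" using ab W(2) by blast
      then show "u \<in> {zvec}" using ab L_zvec by simp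
    qed
    have "zvec \<in> V" "zvec \<in> W" using W(2) by auto
    then have "zvec \<in> \<phi> ` V" "zvec \<in> \<phi> ` W"
      by (auto intro!: rev_image_eqI simp: L_zvec)
    then show "{zvec} \<subseteq> \<phi> ` V \<inter> \<phi> ` W" by blast
  qed
  moreover have "\<forall>x\<in>Rn n. \<exists>v\<in>\<phi> ` V. \<exists>w\<in>\<phi> ` W. x = (\<lambda>i. v i + w i)"
  proof
    fix x :: "nat \<Rightarrow> 'r" assume x: "x \<in> Rn n"
    obtain v w where vw: "v \<in> V" "w \<in> W" "\<psi> x = (\<lambda>i. v i + w i)" using W(3) L_psiRn by blast
    have "x = \<phi> (\<psi> x)" using x L_inv1 by simp
    also have "\<dots> = (\<lambda>i. \<phi> v i + \<phi> w i)" using vw(3) L_add by simp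
    finally show "\<exists>v\<in>\<phi> ` V. \<exists>w\<in>\<phi> ` W. x = (\<lambda>i. v i + w i)" using vw by blast
  qed
  ultimately show ?thesis unfolding direct_summand_def using L_submod SV W(1) by blast
qed

lemma L_free: "V \<subseteq> Rn n \<Longrightarrow> free_mod V \<Longrightarrow> free_mod (\<phi> ` V)"
proof -
  assume VR: "V \<subseteq> Rn n" and "free_mod V"
  then obtain vs where vs: "set vs \<subseteq> V" "span_R vs = V" "lin_indep vs" unfolding free_mod_def by blast
  have "set (map \<phi> vs) \<subseteq> \<phi> ` V" using vs by auto
  moreover have "span_R (map \<phi> vs) = \<phi> ` V"
  proof
    show "span_R (map \<phi> vs) \<subseteq> \<phi> ` V"
    proof
      fix u assume "u \<in> span_R (map \<phi> vs)"
      then obtain cs where cs: "length cs = length vs" "u = lincomb cs (map \<phi> vs)" by (auto simp: span_R_def)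
      then have "u = \<phi> (lincomb cs vs)" by (simp add: L_lincomb)
      moreover have "lincomb cs vs \<in> V" using cs vs(2) by (auto simp: span_R_def)
      ultimately show "u \<in> \<phi> ` V" by blast
    qed
    show "\<phi> ` V \<subseteq> span_R (map \<phi> vs)"
    proof
      fix u assume "u \<in> \<phi> ` V"
      then obtain a where a: "a \<in> V" "u = \<phi> a" by blast
      then obtain cs where cs: "length cs = length vs" "a = lincomb cs vs" using vs(2) by (auto simp: span_R_def)
      then have "u = lincomb cs (map \<phi> vs)" using a by (simp add: L_lincomb)
      then show "u \<in> span_R (map \<phi> vs)" using cs by (auto simp: span_R_def)
    qed
  qed
  moreover have "lin_indep (map \<phi> vs)"
    unfolding lin_indep_def
  proof (intro allI impI)
    fix cs assume h: "length cs = length (map \<phi> vs) \<and> lincomb cs (map \<phi> vs) = zvec"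
    then have "\<phi> (lincomb cs vs) = \<phi> zvec" by (simp add: L_lincomb L_zvec)
    moreover have "lincomb cs vs \<in> Rn n" using vs VR by (intro lincomb_Rn) auto
    moreover have "zvec \<in> Rn n" by (simp add: zvec_def Rn_def)
    ultimately have "lincomb cs vs = zvec" using L_inj by blast
    moreover have "length cs = length vs" using h by simp
    ultimately show "\<forall>c\<in>set cs. c = 0" using vs(3) unfolding lin_indep_def by blast
  qed
  ultimately show ?thesis unfolding free_mod_def by blast
qed

lemma L_quot_free: "V \<subseteq> Rn n \<Longrightarrow> submod n V \<Longrightarrow> quot_free n V \<Longrightarrow> quot_free n (\<phi> ` V)"
proof -
  assume VR: "V \<subseteq> Rn n" and SV: "submod n V" and "quot_free n V"
  then obtain ws where ws: "set ws \<subseteq> Rn n"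
     "\<forall>v\<in>Rn n. \<exists>cs. length cs = length ws \<and> (\<lambda>i. v i - lincomb cs ws i) \<in> V"
     "\<forall>cs. length cs = length ws \<and> lincomb cs ws \<in> V \<longrightarrow> (\<forall>c\<in>set cs. c = 0)"
    unfolding quot_free_def by blast
  have "set (map \<phi> ws) \<subseteq> Rn n" using L_Rn by auto
  moreover have "\<forall>v\<in>Rn n. \<exists>cs. length cs = length (map \<phi> ws) \<and> (\<lambda>i. v i - lincomb cs (map \<phi> ws) i) \<in> \<phi> ` V"
  proof
    fix v :: "nat \<Rightarrow> 'r" assume v: "v \<in> Rn n"
    obtain cs where cs: "length cs = length ws" "(\<lambda>i. \<psi> v i - lincomb cs ws i) \<in> V"
      using ws(2) L_psiRn by blast
    have "(\<lambda>i. \<psi> v i - lincomb cs ws i) = (\<lambda>i. \<psi> v i + (-1) * lincomb cs ws i)" by simp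
    then have "\<phi> (\<lambda>i. \<psi> v i - lincomb cs ws i) = (\<lambda>i. \<phi> (\<psi> v) i + (-1) * \<phi> (lincomb cs ws) i)"
      by (simp only: L_add L_smul)
    also have "\<dots> = (\<lambda>i. v i - lincomb cs (map \<phi> ws) i)" using v by (simp add: L_inv1 L_lincomb)
    finally show "\<exists>cs. length cs = length (map \<phi> ws) \<and> (\<lambda>i. v i - lincomb cs (map \<phi> ws) i) \<in> \<phi> ` V"
      using cs by (metis image_eqI length_map)
  qed
  moreover have "\<forall>cs. length cs = length (map \<phi> ws) \<and> lincomb cs (map \<phi> ws) \<in> \<phi> ` V \<longrightarrow> (\<forall>c\<in>set cs. c = 0)"
  proof (intro allI impI)
    fix cs assume h: "length cs = length (map \<phi> ws) \<and> lincomb cs (map \<phi> ws) \<in> \<phi> ` V"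
    then obtain a where a: "a \<in> V" "\<phi> (lincomb cs ws) = \<phi> a" by (auto simp: L_lincomb)
    have "lincomb cs ws \<in> Rn n" using ws(1) by (rule lincomb_Rn)
    then have "lincomb cs ws = a" using a VR L_inj by blast
    then have "lincomb cs ws \<in> V" using a by simp
    moreover have "length cs = length ws" using h by simp
    ultimately show "\<forall>c\<in>set cs. c = 0" using ws(3) by blast
  qed
  ultimately show ?thesis unfolding quot_free_def by blast
qed

lemma L_nonzero: "V \<subseteq> Rn n \<Longrightarrow> V \<noteq> {zvec} \<Longrightarrow> \<phi> ` V \<noteq> {zvec}"
proof
  assume V: "V \<subseteq> Rn n" "V \<noteq> {zvec}" "\<phi> ` V = {zvec}"
  have e: "\<phi> ` {zvec} = {zvec}" by (simp only: image_insert image_empty L_zvec)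
  have z: "{zvec} \<subseteq> Rn n" by (simp add: zvec_def Rn_def)
  have "V = {zvec}" by (rule L_img_inj[OF V(1) z]) (simp only: V(3) e)
  with V(2) show False by simp
qed

lemma L_nonfull: "V \<subseteq> Rn n \<Longrightarrow> V \<noteq> Rn n \<Longrightarrow> \<phi> ` V \<noteq> Rn n"
proof
  assume V: "V \<subseteq> Rn n" "V \<noteq> Rn n" "\<phi> ` V = Rn n"
  have "V = Rn n" by (rule L_img_inj[OF V(1) order_refl]) (simp add: V(3) L_img_Rn)
  with V(2) show False by simp
qed

lemma L_strict: "V \<subset> W \<Longrightarrow> W \<subseteq> Rn n \<Longrightarrow> \<phi> ` V \<subset> \<phi> ` W"
proof -
  assume VW: "V \<subset> W" and W: "W \<subseteq> Rn n"
  have s: "\<phi> ` V \<subseteq> \<phi> ` W" using VW by (intro image_mono) simp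
  have "\<phi> ` V \<noteq> \<phi> ` W"
  proof
    assume "\<phi> ` V = \<phi> ` W"
    moreover have "V \<subseteq> Rn n" using VW W by simp
    ultimately have "V = W" using L_img_inj W by blast
    with VW show False by simp
  qed
  with s show ?thesis by simp
qed

lemma L_vertex: "tits_vertex n V \<Longrightarrow> tits_vertex n (\<phi> ` V)"
proof -
  assume T: "tits_vertex n V"
  then have SV: "submod n V" by (simp add: tits_vertex_def direct_summand_def)
  then have VR: "V \<subseteq> Rn n" by (simp add: submod_def)
  show ?thesis using T unfolding tits_vertex_def
    using L_direct_summand L_free[OF VR] L_quot_free[OF VR SV] L_nonzero[OF VR] L_nonfull[OF VR] by blast
qed

lemma L_flag: "is_flag n F \<Longrightarrow> is_flag n (map ((`) \<phi>) F)"
proof -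
  assume F: "is_flag n F"
  have R: "V \<subseteq> Rn n" if V: "V \<in> set F" for V
  proof -
    have "direct_summand n V" using F V by (simp add: is_flag_def)
    then show ?thesis by (simp add: direct_summand_def submod_def)
  qed
  have sw: "sorted_wrt (\<subset>) F" using F by (simp add: is_flag_def)
  have "sorted_wrt (\<lambda>V W. \<phi> ` V \<subset> \<phi> ` W) F"
  proof (rule sorted_wrt_mono_rel[OF _ sw])
    fix V W assume "V \<in> set F" "W \<in> set F" "V \<subset> W"
    then show "\<phi> ` V \<subset> \<phi> ` W" using L_strict[of V W] R[of W] by simp
  qed
  then have "sorted_wrt (\<subset>) (map ((`) \<phi>) F)"
    by (simp add: sorted_wrt_map)
  moreover have "\<forall>V\<in>set (map ((`) \<phi>) F). direct_summand n V \<and> free_mod V \<and> V \<noteq> {zvec} \<and> V \<noteq> Rn n"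
  proof
    fix U assume "U \<in> set (map ((`) \<phi>) F)"
    then obtain V where V: "V \<in> set F" "U = \<phi> ` V" by auto
    have P: "direct_summand n V" "free_mod V" "V \<noteq> {zvec}" "V \<noteq> Rn n" using F V(1) unfolding is_flag_def by blast+
    show "direct_summand n U \<and> free_mod U \<and> U \<noteq> {zvec} \<and> U \<noteq> Rn n"
      unfolding V(2) using L_direct_summand[OF P(1)] L_free[OF R[OF V(1)] P(2)]
        L_nonzero[OF R[OF V(1)] P(3)] L_nonfull[OF R[OF V(1)] P(4)] by blast
  qed
  ultimately show ?thesis unfolding is_flag_def by blast
qed

lemma L_simplex: "tits_simplex n \<sigma> \<Longrightarrow> tits_simplex n (map ((`) \<phi>) \<sigma>)"
proof -
  assume T: "tits_simplex n \<sigma>"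
  show ?thesis
  proof (cases "\<sigma> = []")
    case True then show ?thesis by (simp add: tits_simplex_def)
  next
    case False
    then have G: "good_flag n \<sigma>" and V: "\<forall>V\<in>set \<sigma>. tits_vertex n V" using T by (auto simp: tits_simplex_def)
    then obtain H where H: "complete_flag n H" "set \<sigma> \<subseteq> set H" "is_flag n \<sigma>" unfolding good_flag_def by blast
    have "complete_flag n (map ((`) \<phi>) H)" using H(1) L_flag by (simp add: complete_flag_def)
    moreover have "set (map ((`) \<phi>) \<sigma>) \<subseteq> set (map ((`) \<phi>) H)" using H(2) by auto
    ultimately have "good_flag n (map ((`) \<phi>) \<sigma>)" using L_flag[OF H(3)] unfolding good_flag_def by blast
    then show ?thesis using V L_vertex by (auto simp: tits_simplex_def)
  qed
qed

end


lemma ma_Rn: "mat_act n g v \<in> Rn n"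
  by (simp add: mat_act_def Rn_def)

lemma ma_add: "mat_act n g (\<lambda>i. a i + b i) = (\<lambda>i. mat_act n g a i + mat_act n g b i)"
  by (auto simp: mat_act_def fun_eq_iff distrib_left sum.distrib)

lemma ma_smul: "mat_act n g (\<lambda>i. c * a i) = (\<lambda>i. c * mat_act n g a i)"
  by (auto simp: mat_act_def fun_eq_iff sum_distrib_left mult.left_commute)

lemma ma_lincomb: "mat_act n g (lincomb cs vs) = lincomb cs (map (mat_act n g) vs)"
proof
  fix i
  show "mat_act n g (lincomb cs vs) i = lincomb cs (map (mat_act n g) vs) i"
  proof (cases "i < n")
    case True
    have "mat_act n g (lincomb cs vs) i = (\<Sum>k<n. g i k * (\<Sum>j<length vs. cs ! j * (vs ! j) k))"
      using True by (simp add: mat_act_def lincomb_def)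
    also have "\<dots> = (\<Sum>k<n. \<Sum>j<length vs. cs ! j * (g i k * (vs ! j) k))"
      by (simp add: sum_distrib_left mult.left_commute)
    also have "\<dots> = (\<Sum>j<length vs. \<Sum>k<n. cs ! j * (g i k * (vs ! j) k))"
      by (rule sum.swap)
    also have "\<dots> = (\<Sum>j<length vs. cs ! j * mat_act n g (vs ! j) i)"
      using True by (simp add: mat_act_def sum_distrib_left)
    also have "\<dots> = lincomb cs (map (mat_act n g) vs) i"
      unfolding lincomb_def by (intro sum.cong) auto
    finally show ?thesis .
  next
    case False
    then have "lincomb cs (map (mat_act n g) vs) i = 0"
      unfolding lincomb_def by (intro sum.neutral) (auto simp: mat_act_def)
    with False show ?thesis by (simp add: mat_act_def)
  qed
qed

lemma ma_inv:
  assumes gh: "\<forall>i<n. \<forall>j<n. (\<Sum>l<n. g i l * h l j) = (if i = j then 1 else 0)"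
    and v: "v \<in> Rn n"
  shows "mat_act n g (mat_act n h v) = v"
proof
  fix i
  show "mat_act n g (mat_act n h v) i = v i"
  proof (cases "i < n")
    case True
    have "mat_act n g (mat_act n h v) i = (\<Sum>j<n. g i j * (\<Sum>l<n. h j l * v l))"
      using True by (simp add: mat_act_def)
    also have "\<dots> = (\<Sum>j<n. \<Sum>l<n. g i j * h j l * v l)"
      by (simp add: sum_distrib_left mult.assoc)
    also have "\<dots> = (\<Sum>l<n. \<Sum>j<n. g i j * h j l * v l)"
      by (rule sum.swap)
    also have "\<dots> = (\<Sum>l<n. (\<Sum>j<n. g i j * h j l) * v l)"
      by (simp add: sum_distrib_right)
    also have "\<dots> = (\<Sum>l<n. (if i = l then v l else 0))"
      using gh True by (intro sum.cong) auto
    also have "\<dots> = v i" using True by simp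
    finally show ?thesis .
  next
    case False
    then show ?thesis using v by (simp add: mat_act_def Rn_def)
  qed
qed

lemma GL_liso:
  assumes "in_GL n g"
  obtains h where "liso n (mat_act n g) (mat_act n h)"
proof -
  obtain h where gh: "\<forall>i<n. \<forall>j<n. (\<Sum>l<n. g i l * h l j) = (if i = j then 1 else 0)"
    "\<forall>i<n. \<forall>j<n. (\<Sum>l<n. h i l * g l j) = (if i = j then 1 else 0)"
    using assms unfolding in_GL_def by blast
  have "liso n (mat_act n g) (mat_act n h)"
    unfolding liso_def
    by (intro conjI allI ballI ma_Rn ma_add ma_smul ma_lincomb ma_inv[OF gh(1)] ma_inv[OF gh(2)])
  then show ?thesis by (rule that)
qed

definition okl :: "nat \<Rightarrow> (nat \<Rightarrow> 'r::comm_ring_1) set list \<Rightarrow> bool" where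
  "okl n \<sigma> \<longleftrightarrow> (\<forall>V\<in>set \<sigma>. V \<subseteq> Rn n)"

definition push :: "((nat \<Rightarrow> 'r::comm_ring_1) \<Rightarrow> (nat \<Rightarrow> 'r)) \<Rightarrow> ((nat \<Rightarrow> 'r) set list \<Rightarrow> 'k::field)
    \<Rightarrow> ((nat \<Rightarrow> 'r) set list \<Rightarrow> 'k)" where
  "push \<phi> c = (\<lambda>\<tau>. \<Sum>\<sigma>\<in>{\<sigma>. c \<sigma> \<noteq> 0 \<and> map (\<lambda>V. \<phi> ` V) \<sigma> = \<tau>}. c \<sigma>)"

lemma chain_act_push: "chain_act n g c = push (mat_act n g) c"
  by (simp add: chain_act_def push_def)

lemma del_nth_map: "del_nth i (map f xs) = map f (del_nth i xs)"
  by (simp add: del_nth_def take_map drop_map)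

lemma okl_del: "okl n \<sigma> \<Longrightarrow> okl n (del_nth i \<sigma>)"
  unfolding okl_def del_nth_def by (auto dest: in_set_dropD in_set_takeD)

lemma simplex_okl: "tits_simplex n \<sigma> \<Longrightarrow> okl n \<sigma>"
proof -
  assume T: "tits_simplex n \<sigma>"
  show ?thesis unfolding okl_def
  proof
    fix V assume V: "V \<in> set \<sigma>"
    then have "\<sigma> \<noteq> []" by auto
    then have "tits_vertex n V" using T V by (simp add: tits_simplex_def)
    then show "V \<subseteq> Rn n" by (simp add: tits_vertex_def direct_summand_def submod_def)
  qed
qed

lemma chains_okl: "c \<in> chains n m \<Longrightarrow> c \<sigma> \<noteq> 0 \<Longrightarrow> okl n \<sigma>"
  unfolding chains_def using simplex_okl by blast

context
  fixes n :: nat and \<phi> \<psi> :: "(nat \<Rightarrow> 'r::comm_ring_1) \<Rightarrow> (nat \<Rightarrow> 'r)"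
  assumes L: "liso n \<phi> \<psi>"
begin

abbreviation "M \<equiv> map (\<lambda>V. \<phi> ` V)"
abbreviation "N \<equiv> map (\<lambda>V. \<psi> ` V)"

lemma L': "liso n \<psi> \<phi>" using L by (rule liso_sym)

lemma okl_M: "okl n (M \<sigma>)"
  unfolding okl_def using L_img_sub[OF L] by auto

lemma NM: "okl n \<sigma> \<Longrightarrow> N (M \<sigma>) = \<sigma>"
  unfolding okl_def by (induction \<sigma>) (auto simp: L_img_inv[OF L])

lemma MN: "okl n \<tau> \<Longrightarrow> M (N \<tau>) = \<tau>"
  unfolding okl_def by (induction \<tau>) (auto simp: L_img_inv[OF L'])

lemma M_iff: "okl n a \<Longrightarrow> (M a = \<tau>) \<longleftrightarrow> (a = N \<tau> \<and> okl n \<tau>)"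
proof
  assume a: "okl n a" and e: "M a = \<tau>"
  have "N \<tau> = a" using e NM[OF a] by simp
  moreover have "okl n \<tau>" using e okl_M by blast
  ultimately show "a = N \<tau> \<and> okl n \<tau>" by simp
next
  assume "a = N \<tau> \<and> okl n \<tau>"
  then show "M a = \<tau>" using MN by simp
qed

lemma M_inj: "okl n a \<Longrightarrow> okl n b \<Longrightarrow> M a = M b \<Longrightarrow> a = b"
proof -
  assume a: "okl n a" and b: "okl n b" and e: "M a = M b"
  have "a = N (M a)" using NM[OF a] by simp
  also have "\<dots> = N (M b)" using e by simp
  also have "\<dots> = b" using NM[OF b] by simp
  finally show ?thesis .
qed

context
  fixes c :: "(nat \<Rightarrow> 'r) set list \<Rightarrow> 'k::field"
  assumes hc: "\<And>\<sigma>. c \<sigma> \<noteq> 0 \<Longrightarrow> okl n \<sigma>"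
begin

lemma push_at: "okl n \<sigma> \<Longrightarrow> push \<phi> c (M \<sigma>) = c \<sigma>"
proof -
  assume s: "okl n \<sigma>"
  have "{\<sigma>'. c \<sigma>' \<noteq> 0 \<and> M \<sigma>' = M \<sigma>} = (if c \<sigma> \<noteq> 0 then {\<sigma>} else {})"
    using M_inj[OF hc s] by auto
  then show ?thesis unfolding push_def by simp
qed

lemma push_supp: "{\<tau>. push \<phi> c \<tau> \<noteq> 0} = M ` {\<sigma>. c \<sigma> \<noteq> 0}"
proof
  show "{\<tau>. push \<phi> c \<tau> \<noteq> 0} \<subseteq> M ` {\<sigma>. c \<sigma> \<noteq> 0}"
  proof
    fix \<tau> assume t: "\<tau> \<in> {\<tau>. push \<phi> c \<tau> \<noteq> 0}"
    have "{\<sigma>. c \<sigma> \<noteq> 0 \<and> M \<sigma> = \<tau>} \<noteq> {}"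
    proof
      assume e: "{\<sigma>. c \<sigma> \<noteq> 0 \<and> M \<sigma> = \<tau>} = {}"
      have "push \<phi> c \<tau> = 0" unfolding push_def e by simp
      with t show False by simp
    qed
    then show "\<tau> \<in> M ` {\<sigma>. c \<sigma> \<noteq> 0}" by blast
  qed
  show "M ` {\<sigma>. c \<sigma> \<noteq> 0} \<subseteq> {\<tau>. push \<phi> c \<tau> \<noteq> 0}"
    using push_at hc by auto
qed

lemma push_reindex:
  "(\<Sum>\<tau>\<in>{\<tau>. push \<phi> c \<tau> \<noteq> 0}. F \<tau> (push \<phi> c \<tau>)) = (\<Sum>\<sigma>\<in>{\<sigma>. c \<sigma> \<noteq> 0}. F (M \<sigma>) (c \<sigma>))"
proof -
  have inj: "inj_on M {\<sigma>. c \<sigma> \<noteq> 0}" using M_inj hc by (auto simp: inj_on_def)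
  have "(\<Sum>\<tau>\<in>{\<tau>. push \<phi> c \<tau> \<noteq> 0}. F \<tau> (push \<phi> c \<tau>)) = (\<Sum>\<tau>\<in>M ` {\<sigma>. c \<sigma> \<noteq> 0}. F \<tau> (push \<phi> c \<tau>))"
    by (simp only: push_supp)
  also have "\<dots> = (\<Sum>\<sigma>\<in>{\<sigma>. c \<sigma> \<noteq> 0}. F (M \<sigma>) (push \<phi> c (M \<sigma>)))"
    by (simp add: sum.reindex[OF inj])
  also have "\<dots> = (\<Sum>\<sigma>\<in>{\<sigma>. c \<sigma> \<noteq> 0}. F (M \<sigma>) (c \<sigma>))"
    by (intro sum.cong refl) (simp add: push_at hc)
  finally show ?thesis .
qed

lemma push_bdry: "bdry (push \<phi> c) \<tau> = (if okl n \<tau> then bdry c (N \<tau>) else 0)"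
proof -
  have "bdry (push \<phi> c) \<tau> = (\<Sum>\<sigma>\<in>{\<sigma>. c \<sigma> \<noteq> 0}.
       \<Sum>i\<in>{i. i < length (M \<sigma>) \<and> del_nth i (M \<sigma>) = \<tau>}. (- 1) ^ i * c \<sigma>)"
    unfolding bdry_def by (rule push_reindex)
  also have "\<dots> = (\<Sum>\<sigma>\<in>{\<sigma>. c \<sigma> \<noteq> 0}.
       \<Sum>i\<in>{i. i < length \<sigma> \<and> del_nth i \<sigma> = N \<tau> \<and> okl n \<tau>}. (- 1) ^ i * c \<sigma>)"
  proof (rule sum.cong[OF refl])
    fix \<sigma> assume s: "\<sigma> \<in> {\<sigma>. c \<sigma> \<noteq> 0}"
    have "{i. i < length (M \<sigma>) \<and> del_nth i (M \<sigma>) = \<tau>} = {i. i < length \<sigma> \<and> del_nth i \<sigma> = N \<tau> \<and> okl n \<tau>}"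
      using M_iff[OF okl_del[OF hc]] s by (auto simp: del_nth_map)
    then show "(\<Sum>i\<in>{i. i < length (M \<sigma>) \<and> del_nth i (M \<sigma>) = \<tau>}. (- 1) ^ i * c \<sigma>) =
      (\<Sum>i\<in>{i. i < length \<sigma> \<and> del_nth i \<sigma> = N \<tau> \<and> okl n \<tau>}. (- 1) ^ i * c \<sigma>)" by simp
  qed
  also have "\<dots> = (if okl n \<tau> then bdry c (N \<tau>) else 0)"
    by (cases "okl n \<tau>") (simp_all add: bdry_def)
  finally show ?thesis .
qed

end

lemma push_chains: "c \<in> chains n m \<Longrightarrow> push \<phi> c \<in> chains n m"
proof -
  assume c: "c \<in> chains n m"
  have hc: "\<And>\<sigma>. c \<sigma> \<noteq> 0 \<Longrightarrow> okl n \<sigma>" using chains_okl[OF c] .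
  have e: "{\<tau>. push \<phi> c \<tau> \<noteq> 0} = M ` {\<sigma>. c \<sigma> \<noteq> 0}"
    by (rule push_supp) (rule hc)
  have "finite {\<sigma>. c \<sigma> \<noteq> 0}" using c by (simp add: chains_def)
  then have "finite {\<tau>. push \<phi> c \<tau> \<noteq> 0}" unfolding e by (rule finite_imageI)
  moreover have "tits_simplex n \<tau> \<and> length \<tau> = m" if "push \<phi> c \<tau> \<noteq> 0" for \<tau>
  proof -
    have "\<tau> \<in> {\<tau>. push \<phi> c \<tau> \<noteq> 0}" using that by simp
    then have "\<tau> \<in> M ` {\<sigma>. c \<sigma> \<noteq> 0}" by (simp only: e)
    then obtain \<sigma> where s: "c \<sigma> \<noteq> 0" "\<tau> = M \<sigma>" by blast
    then have "tits_simplex n \<sigma> \<and> length \<sigma> = m" using c by (simp add: chains_def)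
    then show ?thesis using s L_simplex[OF L] by simp
  qed
  ultimately show ?thesis unfolding chains_def by blast
qed

lemma push_cycles: "c \<in> cycles n m \<Longrightarrow> push \<phi> c \<in> cycles n m"
proof -
  assume c: "c \<in> cycles n m"
  then have cc: "c \<in> chains n m" and b: "bdry c = (\<lambda>\<tau>. 0)" by (auto simp: cycles_def)
  have "bdry (push \<phi> c) = (\<lambda>\<tau>. 0)"
    using push_bdry[where c = c, OF chains_okl[OF cc]] b by (auto simp: fun_eq_iff)
  then show ?thesis using push_chains[OF cc] by (simp add: cycles_def)
qed

end


definition red :: "'r::comm_ring_1 \<Rightarrow> nat \<Rightarrow> (nat \<Rightarrow> 'r) set \<Rightarrow> (nat \<Rightarrow> 'r) set" where
  "red x n V = {w. \<exists>v\<in>V. \<exists>u\<in>Rn n. w = (\<lambda>i. v i + x * u i)}"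

lemma Rn_add: "a \<in> Rn n \<Longrightarrow> b \<in> Rn n \<Longrightarrow> (\<lambda>i. a i + b i) \<in> Rn n"
  by (simp add: Rn_def)
lemma Rn_diff: "a \<in> Rn n \<Longrightarrow> b \<in> Rn n \<Longrightarrow> (\<lambda>i. a i - b i) \<in> Rn n"
  by (simp add: Rn_def)
lemma Rn_smul: "a \<in> Rn n \<Longrightarrow> (\<lambda>i. c * a i) \<in> Rn n"
  by (simp add: Rn_def)

lemma red_sub: "V \<subseteq> Rn n \<Longrightarrow> red x n V \<subseteq> Rn n"
  unfolding red_def Rn_def by auto

lemma okl_red: "okl n \<sigma> \<Longrightarrow> okl n (map (red x n) \<sigma>)"
  unfolding okl_def
proof
  fix U assume o: "\<forall>V\<in>set \<sigma>. V \<subseteq> Rn n" and "U \<in> set (map (red x n) \<sigma>)"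
  then obtain V where "V \<in> set \<sigma>" "U = red x n V" by auto
  then show "U \<subseteq> Rn n" using o red_sub by blast
qed

lemma L_red:
  assumes L: "liso n \<phi> \<psi>"
  shows "\<phi> ` (red x n V) = red x n (\<phi> ` V)"
proof
  show "\<phi> ` red x n V \<subseteq> red x n (\<phi> ` V)"
  proof
    fix w assume "w \<in> \<phi> ` red x n V"
    then obtain v u where vu: "v \<in> V" "u \<in> Rn n" "w = \<phi> (\<lambda>i. v i + x * u i)"
      unfolding red_def by blast
    have "w = (\<lambda>i. \<phi> v i + x * \<phi> u i)" using vu(3) by (simp add: L_add[OF L] L_smul[OF L])
    then show "w \<in> red x n (\<phi> ` V)" unfolding red_def using vu L_Rn[OF L] by blast
  qed
  show "red x n (\<phi> ` V) \<subseteq> \<phi> ` red x n V"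
  proof
    fix w assume "w \<in> red x n (\<phi> ` V)"
    then obtain v u where vu: "v \<in> V" "u \<in> Rn n" "w = (\<lambda>i. \<phi> v i + x * u i)"
      unfolding red_def by blast
    have "\<phi> (\<lambda>i. v i + x * \<psi> u i) = (\<lambda>i. \<phi> v i + x * \<phi> (\<psi> u) i)"
      by (simp add: L_add[OF L] L_smul[OF L])
    also have "\<dots> = w" using vu by (simp add: L_inv1[OF L])
    finally have "w = \<phi> (\<lambda>i. v i + x * \<psi> u i)" by simp
    moreover have "(\<lambda>i. v i + x * \<psi> u i) \<in> red x n V"
      unfolding red_def using vu L_psiRn[OF L] by blast
    ultimately show "w \<in> \<phi> ` red x n V" by blast
  qed
qed

lemma L_red_map:
  assumes L: "liso n \<phi> \<psi>"
  shows "map (red x n) (map (\<lambda>V. \<phi> ` V) \<sigma>) = map (\<lambda>V. \<phi> ` V) (map (red x n) \<sigma>)"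
  by (induction \<sigma>) (simp_all add: L_red[OF L])

definition gsum :: "('a \<Rightarrow> 'k \<Rightarrow> 'k::field) \<Rightarrow> ('a \<Rightarrow> 'k) \<Rightarrow> 'k" where
  "gsum G c = (\<Sum>\<sigma>\<in>{\<sigma>. c \<sigma> \<noteq> 0}. G \<sigma> (c \<sigma>))"

lemma gsum_ext:
  assumes "finite T" "{\<sigma>. c \<sigma> \<noteq> 0} \<subseteq> T" "\<And>\<sigma>. G \<sigma> 0 = 0"
  shows "gsum G c = (\<Sum>\<sigma>\<in>T. G \<sigma> (c \<sigma>))"
  unfolding gsum_def by (rule sum.mono_neutral_left) (use assms in auto)

lemma gsum_add:
  assumes fc: "finite {\<sigma>. c \<sigma> \<noteq> 0}" and fd: "finite {\<sigma>. d \<sigma> \<noteq> 0}"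
    and G: "\<And>\<sigma> a b. G \<sigma> (a + b) = G \<sigma> a + G \<sigma> b"
  shows "gsum G (\<lambda>\<sigma>. c \<sigma> + d \<sigma>) = gsum G c + gsum G d"
proof -
  have G0: "G \<sigma> 0 = 0" for \<sigma>
  proof -
    have "G \<sigma> 0 + 0 = G \<sigma> 0 + G \<sigma> 0" using G[of \<sigma> 0 0] by simp
    then show ?thesis by (metis add_left_cancel)
  qed
  define T where "T = {\<sigma>. c \<sigma> \<noteq> 0} \<union> {\<sigma>. d \<sigma> \<noteq> 0}"
  have fT: "finite T" using fc fd by (simp add: T_def)
  have "gsum G (\<lambda>\<sigma>. c \<sigma> + d \<sigma>) = (\<Sum>\<sigma>\<in>T. G \<sigma> (c \<sigma> + d \<sigma>))"
    by (rule gsum_ext[OF fT]) (auto simp: T_def G0)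
  also have "\<dots> = (\<Sum>\<sigma>\<in>T. G \<sigma> (c \<sigma>)) + (\<Sum>\<sigma>\<in>T. G \<sigma> (d \<sigma>))"
    by (simp add: G sum.distrib)
  also have "\<dots> = gsum G c + gsum G d"
    using gsum_ext[OF fT, of c G] gsum_ext[OF fT, of d G] G0 by (simp add: T_def)
  finally show ?thesis .
qed

lemma gsum_smul:
  assumes fc: "finite {\<sigma>. c \<sigma> \<noteq> 0}"
    and G: "\<And>\<sigma> a b. G \<sigma> (a * b) = a * G \<sigma> b"
  shows "gsum G (\<lambda>\<sigma>. a * c \<sigma>) = a * gsum G c"
proof -
  have G0: "G \<sigma> 0 = 0" for \<sigma> using G[of \<sigma> 0 0] by simp
  have "gsum G (\<lambda>\<sigma>. a * c \<sigma>) = (\<Sum>\<sigma>\<in>{\<sigma>. c \<sigma> \<noteq> 0}. G \<sigma> (a * c \<sigma>))"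
    by (rule gsum_ext[OF fc]) (auto simp: G0)
  also have "\<dots> = a * gsum G c" by (simp add: G gsum_def sum_distrib_left)
  finally show ?thesis .
qed

lemma bdry_gsum: "bdry c \<tau> = gsum (\<lambda>\<sigma> v. \<Sum>i\<in>{i. i < length \<sigma> \<and> del_nth i \<sigma> = \<tau>}. (- 1) ^ i * v) c"
  by (simp add: bdry_def gsum_def)

lemma chains_add: "c \<in> chains n m \<Longrightarrow> d \<in> chains n m \<Longrightarrow> (\<lambda>\<sigma>. c \<sigma> + d \<sigma>) \<in> chains n m"
proof -
  assume c: "c \<in> chains n m" and d: "d \<in> chains n m"
  have "{\<sigma>. c \<sigma> + d \<sigma> \<noteq> 0} \<subseteq> {\<sigma>. c \<sigma> \<noteq> 0} \<union> {\<sigma>. d \<sigma> \<noteq> 0}" by auto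
  moreover have "finite ({\<sigma>. c \<sigma> \<noteq> 0} \<union> {\<sigma>. d \<sigma> \<noteq> 0})" using c d by (simp add: chains_def)
  ultimately have "finite {\<sigma>. c \<sigma> + d \<sigma> \<noteq> 0}" by (rule finite_subset)
  moreover have "tits_simplex n \<sigma> \<and> length \<sigma> = m" if "c \<sigma> + d \<sigma> \<noteq> 0" for \<sigma>
  proof -
    have "c \<sigma> \<noteq> 0 \<or> d \<sigma> \<noteq> 0" using that by auto
    then show ?thesis using c d unfolding chains_def by blast
  qed
  ultimately show ?thesis unfolding chains_def by blast
qed

lemma chains_smul: "c \<in> chains n m \<Longrightarrow> (\<lambda>\<sigma>. a * c \<sigma>) \<in> chains n m"
proof -
  assume c: "c \<in> chains n m"
  have "{\<sigma>. a * c \<sigma> \<noteq> 0} \<subseteq> {\<sigma>. c \<sigma> \<noteq> 0}" by auto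
  moreover have "finite {\<sigma>. c \<sigma> \<noteq> 0}" using c by (simp add: chains_def)
  ultimately have "finite {\<sigma>. a * c \<sigma> \<noteq> 0}" using finite_subset by blast
  moreover have "tits_simplex n \<sigma> \<and> length \<sigma> = m" if "a * c \<sigma> \<noteq> 0" for \<sigma>
  proof -
    have "c \<sigma> \<noteq> 0" using that by auto
    then show ?thesis using c unfolding chains_def by blast
  qed
  ultimately show ?thesis unfolding chains_def by blast
qed

lemma chains_fin: "c \<in> chains n m \<Longrightarrow> finite {\<sigma>. c \<sigma> \<noteq> 0}"
  by (simp add: chains_def)

lemma cycles_add: "c \<in> cycles n m \<Longrightarrow> d \<in> cycles n m \<Longrightarrow> (\<lambda>\<sigma>. c \<sigma> + d \<sigma>) \<in> cycles n m"
proof -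
  assume c: "c \<in> cycles n m" and d: "d \<in> cycles n m"
  have cc: "c \<in> chains n m" and dc: "d \<in> chains n m" using c d by (auto simp: cycles_def)
  have "bdry (\<lambda>\<sigma>. c \<sigma> + d \<sigma>) \<tau> = bdry c \<tau> + bdry d \<tau>" for \<tau>
    unfolding bdry_gsum by (rule gsum_add[OF chains_fin[OF cc] chains_fin[OF dc]]) (simp add: distrib_left sum.distrib)
  then show ?thesis using c d chains_add[OF cc dc] by (simp add: cycles_def fun_eq_iff)
qed

lemma cycles_smul: "c \<in> cycles n m \<Longrightarrow> (\<lambda>\<sigma>. a * c \<sigma>) \<in> cycles n m"
proof -
  assume c: "c \<in> cycles n m"
  have cc: "c \<in> chains n m" using c by (auto simp: cycles_def)
  have "bdry (\<lambda>\<sigma>. a * c \<sigma>) \<tau> = a * bdry c \<tau>" for \<tau>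
    unfolding bdry_gsum by (rule gsum_smul[OF chains_fin[OF cc]]) (simp add: sum_distrib_left mult.left_commute)
  then show ?thesis using c chains_smul[OF cc] by (simp add: cycles_def fun_eq_iff)
qed

definition fibsum :: "'r::comm_ring_1 \<Rightarrow> nat \<Rightarrow> ((nat \<Rightarrow> 'r) set list \<Rightarrow> 'k::field) \<Rightarrow> (nat \<Rightarrow> 'r) set list \<Rightarrow> 'k" where
  "fibsum x n z \<rho> = gsum (\<lambda>\<sigma> v. if map (red x n) \<sigma> = \<rho> then v else 0) z"

lemma fibsum_add: "c \<in> chains n m \<Longrightarrow> d \<in> chains n m \<Longrightarrow>
    fibsum x n (\<lambda>\<sigma>. c \<sigma> + d \<sigma>) \<rho> = fibsum x n c \<rho> + fibsum x n d \<rho>"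
  unfolding fibsum_def by (rule gsum_add[OF chains_fin chains_fin]) auto

lemma fibsum_smul: "c \<in> chains n m \<Longrightarrow> fibsum x n (\<lambda>\<sigma>. a * c \<sigma>) \<rho> = a * fibsum x n c \<rho>"
  unfolding fibsum_def by (rule gsum_smul[OF chains_fin]) auto

lemma push_fib:
  assumes L: "liso n \<phi> \<psi>" and c: "c \<in> chains n m"
  shows "fibsum x n (push \<phi> c) \<rho> = (if okl n \<rho> then fibsum x n c (map (\<lambda>V. \<psi> ` V) \<rho>) else 0)"
proof -
  have hc: "\<And>\<sigma>. c \<sigma> \<noteq> 0 \<Longrightarrow> okl n \<sigma>" using chains_okl[OF c] .
  have "fibsum x n (push \<phi> c) \<rho> = (\<Sum>\<sigma>\<in>{\<sigma>. c \<sigma> \<noteq> 0}.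
      if map (red x n) (map (\<lambda>V. \<phi> ` V) \<sigma>) = \<rho> then c \<sigma> else 0)"
    unfolding fibsum_def gsum_def by (rule push_reindex[OF L hc])
  also have "\<dots> = (\<Sum>\<sigma>\<in>{\<sigma>. c \<sigma> \<noteq> 0}.
      if map (red x n) \<sigma> = map (\<lambda>V. \<psi> ` V) \<rho> \<and> okl n \<rho> then c \<sigma> else 0)"
  proof (rule sum.cong[OF refl])
    fix \<sigma> assume s: "\<sigma> \<in> {\<sigma>. c \<sigma> \<noteq> 0}"
    have o: "okl n (map (red x n) \<sigma>)" using okl_red hc s by blast
    have "(map (red x n) (map (\<lambda>V. \<phi> ` V) \<sigma>) = \<rho>) = (map (\<lambda>V. \<phi> ` V) (map (red x n) \<sigma>) = \<rho>)"
      by (simp only: L_red_map[OF L])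
    also have "\<dots> = (map (red x n) \<sigma> = map (\<lambda>V. \<psi> ` V) \<rho> \<and> okl n \<rho>)"
      by (rule M_iff[OF L o])
    finally show "(if map (red x n) (map (\<lambda>V. \<phi> ` V) \<sigma>) = \<rho> then c \<sigma> else 0) =
      (if map (red x n) \<sigma> = map (\<lambda>V. \<psi> ` V) \<rho> \<and> okl n \<rho> then c \<sigma> else 0)" by simp
  qed
  also have "\<dots> = (if okl n \<rho> then fibsum x n c (map (\<lambda>V. \<psi> ` V) \<rho>) else 0)"
    by (cases "okl n \<rho>") (simp_all add: fibsum_def gsum_def)
  finally show ?thesis .
qed


lemma sorted_wrt_psubset_distinct: "sorted_wrt (\<subset>) xs \<Longrightarrow> distinct xs"
  by (induction xs) auto

lemma no_simplex_len:
  assumes "n \<ge> 1" "tits_simplex n \<sigma>"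
  shows "length \<sigma> \<noteq> n"
proof
  assume len: "length \<sigma> = n"
  then have "\<sigma> \<noteq> []" using assms by auto
  then have G: "good_flag n \<sigma>" using assms by (simp add: tits_simplex_def)
  then obtain H where H: "complete_flag n H" "set \<sigma> \<subseteq> set H" and F: "is_flag n \<sigma>"
    unfolding good_flag_def by blast
  have "distinct \<sigma>" using F by (simp add: is_flag_def sorted_wrt_psubset_distinct)
  then have "card (set \<sigma>) = n" using len by (simp add: distinct_card)
  moreover have "card (set \<sigma>) \<le> card (set H)" using H(2) by (simp add: card_mono)
  moreover have "card (set H) \<le> n - 1" using H(1) card_length[of H] by (simp add: complete_flag_def)
  ultimately show False using assms(1) by linarith
qed

lemma chains_nn: "n \<ge> 1 \<Longrightarrow> c \<in> chains n n \<Longrightarrow> c = (\<lambda>\<sigma>. 0)"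
proof
  fix \<sigma> assume n: "n \<ge> 1" and c: "c \<in> chains n n"
  show "c \<sigma> = 0"
  proof (rule ccontr)
    assume "c \<sigma> \<noteq> 0"
    then have "tits_simplex n \<sigma> \<and> length \<sigma> = n" using c by (simp add: chains_def)
    then show False using no_simplex_len[OF n] by blast
  qed
qed

lemma bdry_zero: "bdry (\<lambda>\<sigma>. 0 :: 'k::field) = (\<lambda>\<tau>. 0)"
  by (simp add: bdry_def)

lemma zero_chains: "(\<lambda>\<sigma>. 0 :: 'k::field) \<in> chains n m"
  by (simp add: chains_def)

lemma zero_cycles: "(\<lambda>\<sigma>. 0 :: 'k::field) \<in> cycles n m"
  by (simp add: cycles_def zero_chains bdry_zero)

lemma boundaries_zero:
  assumes "n \<ge> 2"
  shows "(boundaries n (n - 1) :: ((nat \<Rightarrow> 'r::comm_ring_1) set list \<Rightarrow> 'k::field) set) = {\<lambda>\<sigma>. 0}"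
proof -
  have e: "Suc (n - 1) = n" using assms by simp
  have "(chains n n :: ((nat \<Rightarrow> 'r) set list \<Rightarrow> 'k) set) = {\<lambda>\<sigma>. 0}"
    using chains_nn[of n] assms zero_chains by fastforce
  then show ?thesis unfolding boundaries_def e by (simp add: bdry_zero)
qed

lemma z1_chains:
  assumes one: "(1::'r::comm_ring_1) \<noteq> 0"
  shows "(z1 n :: (nat \<Rightarrow> 'r) set list \<Rightarrow> 'k::field) \<in> chains n (n - 1)"
proof -
  have fin: "finite ((Fl n :: _ \<Rightarrow> (nat \<Rightarrow> 'r) set list) ` {p. p permutes {..<n}})"
    by (rule finite_imageI) (rule finite_permutations, simp)
  have "finite {\<sigma> :: (nat \<Rightarrow> 'r) set list. (z1 n \<sigma> :: 'k) \<noteq> 0}"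
    by (rule finite_subset[OF z1_supp fin])
  moreover have "tits_simplex n \<sigma> \<and> length \<sigma> = n - 1" if "(z1 n \<sigma> :: 'k) \<noteq> 0" for \<sigma> :: "(nat \<Rightarrow> 'r) set list"
  proof -
    have "\<sigma> \<in> Fl n ` {p. p permutes {..<n}}" using z1_supp that by blast
    then obtain p where "p permutes {..<n}" "\<sigma> = Fl n p" by blast
    then show ?thesis using Fl_simplex[OF one] by simp
  qed
  ultimately show ?thesis unfolding chains_def by blast
qed

lemma z1_cycles:
  assumes one: "(1::'r::comm_ring_1) \<noteq> 0"
  shows "(z1 n :: (nat \<Rightarrow> 'r) set list \<Rightarrow> 'k::field) \<in> cycles n (n - 1)"
proof -
  have "(z1 n :: (nat \<Rightarrow> 'r) set list \<Rightarrow> 'k) \<in> chains n (n - 1)" by (rule z1_chains[OF one])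
  moreover have "bdry (z1 n :: (nat \<Rightarrow> 'r) set list \<Rightarrow> 'k) = (\<lambda>\<tau>. 0)" by (rule z1_bdry)
  ultimately show ?thesis unfolding cycles_def by blast
qed

lemma red_SS_sub:
  fixes x :: "'r::comm_ring_1"
  assumes nu: "\<not> x dvd 1" and A: "A \<subseteq> {..<n}" and e: "red x n (SS n A) = red x n (SS n B)"
  shows "A \<subseteq> B"
proof
  fix j assume j: "j \<in> A"
  show "j \<in> B"
  proof (rule ccontr)
    assume jB: "j \<notin> B"
    have jn: "j < n" using j A by auto
    have "(ev j :: nat \<Rightarrow> 'r) \<in> SS n A" using ev_SS[OF jn j] .
    moreover have "zvec \<in> Rn n" by (simp add: zvec_def Rn_def)
    moreover have "ev j = (\<lambda>i. ev j i + x * zvec i)" by (simp add: zvec_def)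
    ultimately have "(ev j :: nat \<Rightarrow> 'r) \<in> red x n (SS n A)" unfolding red_def by blast
    then have "(ev j :: nat \<Rightarrow> 'r) \<in> red x n (SS n B)" using e by simp
    then obtain v u where vu: "v \<in> SS n B" "ev j = (\<lambda>i. v i + x * u i)" unfolding red_def by blast
    have "ev j j = v j + x * u j" using vu(2) by (metis)
    moreover have "v j = 0" using vu(1) jB by (simp add: SS_def)
    ultimately have "1 = x * u j" by (simp add: ev_def)
    then have "x dvd 1" by (rule dvdI)
    with nu show False by simp
  qed
qed

lemma Fl_red_id:
  fixes x :: "'r::comm_ring_1"
  assumes nu: "\<not> x dvd 1" and p: "p permutes {..<n}"
    and e: "map (red x n) (Fl n p) = map (red x n) (Fl n id :: (nat \<Rightarrow> 'r) set list)"
  shows "p = id"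
proof -
  have k: "p ` {..k} = {..k}" if kn: "k < n - 1" for k
  proof -
    have "map (red x n) (Fl n p) ! k = map (red x n) (Fl n id :: (nat \<Rightarrow> 'r) set list) ! k"
      using e by simp
    then have ee: "red x n (SS n (p ` {..k})) = red x n (SS n {..k} :: (nat \<Rightarrow> 'r) set)"
      using kn by (simp add: Fl_def)
    have s1: "p ` {..k} \<subseteq> {..<n}" using perm_img_sub[OF p] kn by simp
    have s2: "{..k} \<subseteq> {..<n}" using kn by auto
    show ?thesis using red_SS_sub[OF nu s1 ee] red_SS_sub[OF nu s2 ee[symmetric]] by blast
  qed
  have inj: "inj p" using permutes_inj[OF p] .
  have pk: "p k = k" if kn: "k < n - 1" for k
  proof (cases k)
    case 0
    then show ?thesis using k[OF kn] by auto
  next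
    case (Suc k')
    have "p k \<in> {..k}" using k[OF kn] by blast
    moreover have "p k \<notin> {..k'}"
    proof
      assume "p k \<in> {..k'}"
      then have "p k \<in> p ` {..k'}" using k[of k'] kn Suc by simp
      then obtain j where "j \<le> k'" "p j = p k" by auto
      then have "j = k" using injD[OF inj] by metis
      with \<open>j \<le> k'\<close> Suc show False by simp
    qed
    ultimately show ?thesis using Suc by auto
  qed
  have pl: "p (n - 1) = n - 1" if n1: "n \<ge> 1"
  proof (rule ccontr)
    assume ne: "p (n - 1) \<noteq> n - 1"
    have "n - 1 \<in> {..<n}" using n1 by simp
    then have "p (n - 1) \<in> {..<n}" using permutes_in_image[OF p] by blast
    then have lt: "p (n - 1) < n - 1" using ne by simp
    then have "p (p (n - 1)) = p (n - 1)" by (rule pk)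
    then have "p (n - 1) = n - 1" using injD[OF inj] by blast
    with ne show False by simp
  qed
  show ?thesis
  proof
    fix k
    show "p k = id k"
    proof (cases "k < n - 1")
      case True then show ?thesis using pk by simp
    next
      case False
      show ?thesis
      proof (cases "k < n")
        case True
        then have "k = n - 1" "n \<ge> 1" using False by auto
        then show ?thesis using pl by simp
      next
        case False
        then show ?thesis using permutes_not_in[OF p] by simp
      qed
    qed
  qed
qed

lemma z1_id:
  fixes x :: "'r::comm_ring_1"
  assumes nu: "\<not> x dvd 1"
  shows "(z1 n (Fl n id :: (nat \<Rightarrow> 'r) set list) :: 'k::field) = 1"
proof -
  have "{p. p permutes {..<n} \<and> (Fl n p :: (nat \<Rightarrow> 'r) set list) = Fl n id} = {id}"
  proof
    show "{p. p permutes {..<n} \<and> (Fl n p :: (nat \<Rightarrow> 'r) set list) = Fl n id} \<subseteq> {id}"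
    proof
      fix p assume "p \<in> {p. p permutes {..<n} \<and> (Fl n p :: (nat \<Rightarrow> 'r) set list) = Fl n id}"
      then have "p permutes {..<n}" "(Fl n p :: (nat \<Rightarrow> 'r) set list) = Fl n id" by auto
      then have "p = id" using Fl_red_id[OF nu] by metis
      then show "p \<in> {id}" by simp
    qed
    show "{id} \<subseteq> {p. p permutes {..<n} \<and> (Fl n p :: (nat \<Rightarrow> 'r) set list) = Fl n id}"
      by (simp add: permutes_id)
  qed
  then show ?thesis unfolding z1_def by simp
qed

lemma z1_fib:
  fixes x :: "'r::comm_ring_1"
  assumes nu: "\<not> x dvd 1"
  shows "fibsum x n (z1 n :: (nat \<Rightarrow> 'r) set list \<Rightarrow> 'k::field) (map (red x n) (Fl n id)) = 1"
proof -
  define \<sigma>0 where "\<sigma>0 = (Fl n id :: (nat \<Rightarrow> 'r) set list)"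
  have fin: "finite {\<sigma> :: (nat \<Rightarrow> 'r) set list. (z1 n \<sigma> :: 'k) \<noteq> 0}"
  proof (rule finite_subset[OF z1_supp])
    show "finite ((Fl n :: _ \<Rightarrow> (nat \<Rightarrow> 'r) set list) ` {p. p permutes {..<n}})"
      by (rule finite_imageI) (rule finite_permutations, simp)
  qed
  have "fibsum x n (z1 n :: _ \<Rightarrow> 'k) (map (red x n) \<sigma>0) =
      (\<Sum>\<sigma>\<in>{\<sigma>. (z1 n \<sigma> :: 'k) \<noteq> 0}. if \<sigma> = \<sigma>0 then z1 n \<sigma> else 0)"
    unfolding fibsum_def gsum_def
  proof (rule sum.cong[OF refl])
    fix \<sigma> :: "(nat \<Rightarrow> 'r) set list" assume s: "\<sigma> \<in> {\<sigma>. (z1 n \<sigma> :: 'k) \<noteq> 0}"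
    then obtain p where p: "p permutes {..<n}" "\<sigma> = Fl n p" using z1_supp by blast
    have "(map (red x n) \<sigma> = map (red x n) \<sigma>0) = (\<sigma> = \<sigma>0)"
      using Fl_red_id[OF nu p(1)] p(2) unfolding \<sigma>0_def by auto
    then show "(if map (red x n) \<sigma> = map (red x n) \<sigma>0 then z1 n \<sigma> else 0) =
        (if \<sigma> = \<sigma>0 then (z1 n \<sigma> :: 'k) else 0)" by simp
  qed
  also have "\<dots> = (if \<sigma>0 \<in> {\<sigma> :: (nat \<Rightarrow> 'r) set list. (z1 n \<sigma> :: 'k) \<noteq> 0} then z1 n \<sigma>0 else 0)"
    by (rule sum.delta[OF fin]) 
  also have "\<dots> = 1" unfolding \<sigma>0_def by (simp add: z1_id[OF nu])
  finally show ?thesis unfolding \<sigma>0_def .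
qed


definition Tm :: "'r::comm_ring_1 \<Rightarrow> nat \<Rightarrow> nat \<Rightarrow> 'r" where
  "Tm t i j = (if i = j then 1 else 0) + (if i = 1 \<and> j = 0 then t else 0)"

lemma Tm_mult:
  assumes n: "1 < n" and i: "i < n" and j: "j < n"
  shows "(\<Sum>l<n. Tm s i l * Tm t l j) = Tm (s + t) i j"
proof -
  have "(\<Sum>l<n. Tm s i l * Tm t l j) =
      (\<Sum>l<n. (if l = i then Tm t l j else 0) + (if l = 0 then (if i = 1 then s * Tm t l j else 0) else 0))"
    by (intro sum.cong refl) (auto simp: Tm_def[of s] distrib_right)
  also have "\<dots> = (\<Sum>l<n. if l = i then Tm t l j else 0) + (\<Sum>l<n. if l = 0 then (if i = 1 then s * Tm t l j else 0) else 0)"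
    by (rule sum.distrib)
  also have "\<dots> = Tm t i j + (if i = 1 then s * Tm t 0 j else 0)"
    using i n by (simp add: sum.delta)
  also have "\<dots> = Tm (s + t) i j" by (auto simp: Tm_def algebra_simps)
  finally show ?thesis .
qed

lemma Tm_GL:
  assumes n: "1 < n"
  shows "in_GL n (Tm x)"
  unfolding in_GL_def
proof (intro exI[of _ "Tm (- x)"] conjI allI impI)
  fix i j assume ij: "i < n" "j < n"
  have "(\<Sum>l<n. Tm x i l * Tm (- x) l j) = Tm (x + - x) i j" by (rule Tm_mult[OF n ij])
  then show "(\<Sum>l<n. Tm x i l * Tm (- x) l j) = (if i = j then 1 else 0)" by (simp add: Tm_def)
  have "(\<Sum>l<n. Tm (- x) i l * Tm x l j) = Tm (- x + x) i j" by (rule Tm_mult[OF n ij])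
  then show "(\<Sum>l<n. Tm (- x) i l * Tm x l j) = (if i = j then 1 else 0)" by (simp add: Tm_def)
qed

lemma Tm_act:
  assumes n: "1 < n" and v: "v \<in> Rn n"
  shows "mat_act n (Tm x) v = (\<lambda>i. v i + x * (if i = 1 then v 0 else 0))"
proof
  fix i
  show "mat_act n (Tm x) v i = v i + x * (if i = 1 then v 0 else 0)"
  proof (cases "i < n")
    case True
    have "(\<Sum>j<n. Tm x i j * v j) = (\<Sum>j<n. (if j = i then v j else 0) + (if j = 0 then (if i = 1 then x * v j else 0) else 0))"
      by (intro sum.cong refl) (auto simp: Tm_def distrib_right)
    also have "\<dots> = (\<Sum>j<n. if j = i then v j else 0) + (\<Sum>j<n. if j = 0 then (if i = 1 then x * v j else 0) else 0)"
      by (rule sum.distrib)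
    also have "\<dots> = v i + x * (if i = 1 then v 0 else 0)"
      using True n by (simp add: sum.delta)
    finally show ?thesis using True by (simp add: mat_act_def)
  next
    case False
    then show ?thesis using v n by (simp add: mat_act_def Rn_def)
  qed
qed

lemma red_shift:
  fixes x :: "'r::comm_ring_1"
  assumes e: "\<And>v. v \<in> V \<Longrightarrow> \<phi> v = (\<lambda>i. v i + x * u v i)" and u: "\<And>v. v \<in> V \<Longrightarrow> u v \<in> Rn n"
  shows "red x n (\<phi> ` V) = red x n V"
proof
  show "red x n (\<phi> ` V) \<subseteq> red x n V"
  proof
    fix w assume "w \<in> red x n (\<phi> ` V)"
    then obtain v u' where vu: "v \<in> V" "u' \<in> Rn n" "w = (\<lambda>i. \<phi> v i + x * u' i)" unfolding red_def by blast
    have "w = (\<lambda>i. v i + x * (u v i + u' i))" using vu e[OF vu(1)] by (simp add: algebra_simps)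
    moreover have "(\<lambda>i. u v i + u' i) \<in> Rn n" using Rn_add[OF u[OF vu(1)] vu(2)] .
    ultimately show "w \<in> red x n V" unfolding red_def mem_Collect_eq
      by (intro bexI[of _ v] bexI[of _ "\<lambda>i. u v i + u' i"]) (use vu(1) in auto)
  qed
  show "red x n V \<subseteq> red x n (\<phi> ` V)"
  proof
    fix w assume "w \<in> red x n V"
    then obtain v u' where vu: "v \<in> V" "u' \<in> Rn n" "w = (\<lambda>i. v i + x * u' i)" unfolding red_def by blast
    have "w = (\<lambda>i. \<phi> v i + x * (u' i - u v i))" using vu e[OF vu(1)] by (simp add: algebra_simps)
    moreover have "(\<lambda>i. u' i - u v i) \<in> Rn n" using Rn_diff[OF vu(2) u[OF vu(1)]] .
    moreover have "\<phi> v \<in> \<phi> ` V" using vu(1) by blast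
    ultimately show "w \<in> red x n (\<phi> ` V)" unfolding red_def mem_Collect_eq
      by (intro bexI[of _ "\<phi> v"] bexI[of _ "\<lambda>i. u' i - u v i"]) auto
  qed
qed

lemma Tm_red:
  fixes x :: "'r::comm_ring_1"
  assumes n: "1 < n" and V: "V \<subseteq> Rn n"
  shows "red x n (mat_act n (Tm x) ` V) = red x n V"
proof (rule red_shift)
  fix v assume "v \<in> V"
  then have v: "v \<in> Rn n" using V by blast
  show "mat_act n (Tm x) v = (\<lambda>i. v i + x * (if i = 1 then v 0 else 0))" by (rule Tm_act[OF n v])
  show "(\<lambda>i. if i = 1 then v 0 else 0) \<in> Rn n" using n by (simp add: Rn_def)
qed


lemma push_same_fib:
  assumes L: "liso n \<phi> \<psi>" and c: "c \<in> chains n m"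
    and r: "\<And>V. V \<subseteq> Rn n \<Longrightarrow> red x n (\<phi> ` V) = red x n V"
  shows "fibsum x n (push \<phi> c) \<rho> = fibsum x n c \<rho>"
proof -
  have hc: "\<And>\<sigma>. c \<sigma> \<noteq> 0 \<Longrightarrow> okl n \<sigma>" using chains_okl[OF c] .
  have "fibsum x n (push \<phi> c) \<rho> = (\<Sum>\<sigma>\<in>{\<sigma>. c \<sigma> \<noteq> 0}.
      if map (red x n) (map (\<lambda>V. \<phi> ` V) \<sigma>) = \<rho> then c \<sigma> else 0)"
    unfolding fibsum_def gsum_def by (rule push_reindex[OF L hc])
  also have "\<dots> = (\<Sum>\<sigma>\<in>{\<sigma>. c \<sigma> \<noteq> 0}. if map (red x n) \<sigma> = \<rho> then c \<sigma> else 0)"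
  proof (rule sum.cong[OF refl])
    fix \<sigma> assume s: "\<sigma> \<in> {\<sigma>. c \<sigma> \<noteq> 0}"
    have o: "okl n \<sigma>" using hc s by blast
    have meq: "map (red x n) (map (\<lambda>V. \<phi> ` V) \<sigma>) = map (red x n) \<sigma>"
      unfolding map_map comp_def
    proof (rule map_cong[OF refl])
      fix V assume "V \<in> set \<sigma>"
      then have "V \<subseteq> Rn n" using o by (simp add: okl_def)
      then show "red x n (\<phi> ` V) = red x n V" by (rule r)
    qed
    then show "(if map (red x n) (map (\<lambda>V. \<phi> ` V) \<sigma>) = \<rho> then c \<sigma> else 0) =
      (if map (red x n) \<sigma> = \<rho> then c \<sigma> else 0)" by (simp only: meq)
  qed
  also have "\<dots> = fibsum x n c \<rho>" by (simp add: fibsum_def gsum_def)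
  finally show ?thesis .
qed

lemma Fl_ne_M:
  fixes x :: "'r::comm_ring_1"
  assumes n: "1 < n" and x: "x \<noteq> 0" and one: "(1::'r) \<noteq> 0"
  shows "(Fl n p :: (nat \<Rightarrow> 'r) set list) \<noteq> map (\<lambda>V. mat_act n (Tm x) ` V) (Fl n id)"
proof
  assume e: "(Fl n p :: (nat \<Rightarrow> 'r) set list) = map (\<lambda>V. mat_act n (Tm x) ` V) (Fl n id)"
  have "(Fl n p :: (nat \<Rightarrow> 'r) set list) ! 0 = map (\<lambda>V. mat_act n (Tm x) ` V) (Fl n id) ! 0"
    using e by simp
  then have e0: "SS n {p 0} = mat_act n (Tm x) ` (SS n {0} :: (nat \<Rightarrow> 'r) set)"
    using n by (simp add: Fl_def)
  have "(ev 0 :: nat \<Rightarrow> 'r) \<in> SS n {0}" using n by (intro ev_SS) auto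
  then have m: "mat_act n (Tm x) (ev 0 :: nat \<Rightarrow> 'r) \<in> SS n {p 0}" using e0 by simp
  have ev0: "(ev 0 :: nat \<Rightarrow> 'r) \<in> Rn n" using n by (intro ev_Rn) auto
  define w where "w = mat_act n (Tm x) (ev 0 :: nat \<Rightarrow> 'r)"
  have w: "w = (\<lambda>i. ev 0 i + x * (if i = 1 then ev 0 0 else 0))"
    unfolding w_def by (rule Tm_act[OF n ev0])
  have w0: "w 0 = 1" and w1: "w 1 = x" using w by (simp_all add: ev_def)
  have wz: "\<And>i. i \<noteq> p 0 \<Longrightarrow> w i = 0" using m unfolding w_def SS_def by auto
  show False
  proof (cases "p 0 = 0")
    case True
    then have "w 1 = 0" using wz by simp
    with w1 x show False by simp
  next
    case False
    then have "w 0 = 0" using wz by metis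
    with w0 one show False by simp
  qed
qed

theorem mainTheorem19:
  fixes n :: nat
  assumes "\<exists>x::'r::comm_ring_1. x \<noteq> 0 \<and> \<not> x dvd 1"
    and "n \<ge> 2"
  shows "\<not> St_irreducible TYPE('r) TYPE('k::field) n"
proof
  assume irr: "St_irreducible TYPE('r) TYPE('k::field) n"
  obtain x :: 'r where x: "x \<noteq> 0" "\<not> x dvd 1" using assms(1) by blast
  have n: "1 < n" using assms(2) by simp
  have one: "(1::'r) \<noteq> 0"
  proof
    assume "(1::'r) = 0"
    then have "x = x * 1" by simp
    with \<open>(1::'r) = 0\<close> x(1) show False by simp
  qed
  define Z where "Z = (cycles n (n - 1) :: ((nat \<Rightarrow> 'r) set list \<Rightarrow> 'k) set)"
  define B where "B = (boundaries n (n - 1) :: ((nat \<Rightarrow> 'r) set list \<Rightarrow> 'k) set)"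
  have B0: "B = {\<lambda>\<sigma>. 0}" unfolding B_def by (rule boundaries_zero[OF assms(2)])
  define W where "W = {z \<in> Z. \<forall>\<rho>. fibsum x n z \<rho> = 0}"
  have irr': "\<And>W'. B \<subseteq> W' \<and> W' \<subseteq> Z \<and> GL_stable_subspace n W' \<Longrightarrow> W' = B \<or> W' = Z"
    using irr unfolding St_irreducible_def Let_def Z_def B_def by blast
  define z :: "(nat \<Rightarrow> 'r) set list \<Rightarrow> 'k" where "z = z1 n"
  have zZ: "z \<in> Z" unfolding z_def Z_def by (rule z1_cycles[OF one])
  have zc: "z \<in> chains n (n - 1)" using zZ by (simp add: Z_def cycles_def)
  have zW: "z \<notin> W"
  proof
    assume "z \<in> W"
    then have "fibsum x n z (map (red x n) (Fl n id)) = 0" by (simp add: W_def)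
    moreover have "fibsum x n z (map (red x n) (Fl n id)) = 1" unfolding z_def by (rule z1_fib[OF x(2)])
    ultimately show False by simp
  qed
  define \<phi> where "\<phi> = mat_act n (Tm x)"
  obtain h where L: "liso n \<phi> (mat_act n h)" using GL_liso[OF Tm_GL[OF n]] unfolding \<phi>_def by blast
  define z2 where "z2 = push \<phi> z"
  have z2Z: "z2 \<in> Z" unfolding z2_def Z_def by (rule push_cycles[OF L]) (use zZ Z_def in simp)
  have z2c: "z2 \<in> chains n (n - 1)" using z2Z by (simp add: Z_def cycles_def)
  have rr: "\<And>V. V \<subseteq> Rn n \<Longrightarrow> red x n (\<phi> ` V) = red x n V" unfolding \<phi>_def by (rule Tm_red[OF n])
  define zd where "zd = (\<lambda>\<sigma>. z \<sigma> + (-1) * z2 \<sigma>)"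
  have m1c: "(\<lambda>\<sigma>. (-1) * z2 \<sigma>) \<in> chains n (n - 1)" by (rule chains_smul[OF z2c])
  have m1Z: "(\<lambda>\<sigma>. (-1) * z2 \<sigma>) \<in> cycles n (n - 1)"
    by (rule cycles_smul) (use z2Z in \<open>simp add: Z_def\<close>)
  have zdZ: "zd \<in> Z" unfolding zd_def Z_def
    by (rule cycles_add) (use zZ m1Z in \<open>simp_all add: Z_def\<close>)
  have zdW: "zd \<in> W"
  proof -
    have "fibsum x n zd \<rho> = 0" for \<rho>
    proof -
      have "fibsum x n zd \<rho> = fibsum x n z \<rho> + fibsum x n (\<lambda>\<sigma>. (-1) * z2 \<sigma>) \<rho>"
        unfolding zd_def by (rule fibsum_add[OF zc m1c])
      also have "\<dots> = fibsum x n z \<rho> + (-1) * fibsum x n z2 \<rho>"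
        by (rule arg_cong[where f = "\<lambda>t. fibsum x n z \<rho> + t"], rule fibsum_smul[OF z2c])
      also have "fibsum x n z2 \<rho> = fibsum x n z \<rho>"
        unfolding z2_def by (rule push_same_fib[OF L zc rr])
      finally show ?thesis by simp
    qed
    then show ?thesis using zdZ by (simp add: W_def)
  qed
  have zdnz: "zd \<noteq> (\<lambda>\<sigma>. 0)"
  proof
    assume zd0: "zd = (\<lambda>\<sigma>. 0)"
    define \<tau>0 where "\<tau>0 = map (\<lambda>V. \<phi> ` V) (Fl n id :: (nat \<Rightarrow> 'r) set list)"
    have okid: "okl n (Fl n id :: (nat \<Rightarrow> 'r) set list)"
      using Fl_simplex[OF one, of id n] by (intro simplex_okl) simp
    have "z2 \<tau>0 = z (Fl n id)"
      unfolding z2_def \<tau>0_def by (rule push_at[OF L chains_okl[OF zc] okid])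
    also have "\<dots> = 1" unfolding z_def by (rule z1_id[OF x(2)])
    finally have a: "z2 \<tau>0 = 1" .
    have emp: "{p. p permutes {..<n} \<and> (Fl n p :: (nat \<Rightarrow> 'r) set list) = \<tau>0} = {}"
      using Fl_ne_M[OF n x(1) one] unfolding \<tau>0_def \<phi>_def by blast
    have b: "z \<tau>0 = 0" unfolding z_def z1_def emp by simp
    have "zd \<tau>0 = -1" using a b by (simp add: zd_def)
    with zd0 show False by simp
  qed
  have zero_W: "(\<lambda>\<sigma>. 0) \<in> W"
    unfolding W_def Z_def using zero_cycles by (simp add: fibsum_def gsum_def)
  have stable: "GL_stable_subspace n W"
    unfolding GL_stable_subspace_def
  proof (intro conjI ballI allI impI)
    fix a b assume a: "a \<in> W" and b: "b \<in> W"
    have ac: "a \<in> chains n (n - 1)" and bc: "b \<in> chains n (n - 1)" using a b by (auto simp: W_def Z_def cycles_def)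
    have "(\<lambda>\<sigma>. a \<sigma> + b \<sigma>) \<in> Z" using a b cycles_add by (auto simp: W_def Z_def)
    moreover have "fibsum x n (\<lambda>\<sigma>. a \<sigma> + b \<sigma>) \<rho> = 0" for \<rho>
      using fibsum_add[OF ac bc, of x \<rho>] a b by (simp add: W_def)
    ultimately show "(\<lambda>\<sigma>. a \<sigma> + b \<sigma>) \<in> W" by (simp add: W_def)
  next
    fix c :: 'k and a assume a: "a \<in> W"
    have ac: "a \<in> chains n (n - 1)" using a by (auto simp: W_def Z_def cycles_def)
    have "(\<lambda>\<sigma>. c * a \<sigma>) \<in> Z" using a cycles_smul by (auto simp: W_def Z_def)
    moreover have "fibsum x n (\<lambda>\<sigma>. c * a \<sigma>) \<rho> = 0" for \<rho>
      using fibsum_smul[OF ac, of x c \<rho>] a by (simp add: W_def)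
    ultimately show "(\<lambda>\<sigma>. c * a \<sigma>) \<in> W" by (simp add: W_def)
  next
    fix g :: "nat \<Rightarrow> nat \<Rightarrow> 'r" and a assume g: "in_GL n g" and a: "a \<in> W"
    obtain h' where L': "liso n (mat_act n g) (mat_act n h')" using GL_liso[OF g] by blast
    have aZ: "a \<in> Z" using a by (simp add: W_def)
    have ac: "a \<in> chains n (n - 1)" using aZ by (simp add: Z_def cycles_def)
    have "push (mat_act n g) a \<in> Z" unfolding Z_def by (rule push_cycles[OF L']) (use aZ Z_def in simp)
    moreover have "fibsum x n (push (mat_act n g) a) \<rho> = 0" for \<rho>
      using push_fib[OF L' ac, of x \<rho>] a by (simp add: W_def)
    ultimately show "chain_act n g a \<in> W" by (simp add: W_def chain_act_push)
  qed
  have "B \<subseteq> W" using B0 zero_W by simp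
  moreover have "W \<subseteq> Z" by (auto simp: W_def)
  ultimately have "W = B \<or> W = Z" using irr' stable by blast
  then show False
  proof
    assume "W = B"
    then have "zd \<in> B" using zdW by simp
    with B0 zdnz show False by simp
  next
    assume "W = Z"
    with zZ zW show False by simp
  qed
qed

end
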